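(* For every $n\ge 0$, the real Clifford group $\mathcal{C}_n$ has exactly $2\cdot\prod_{i=1}^{n}(4^{i}+2^{i}-2)(2\cdot 4^{i-1})$ elements.
   Context: $X=\begin{bmatrix}0&1\\1&0\end{bmatrix}$, $Z=\begin{bmatrix}1&0\\0&-1\end{bmatrix}$. The real Pauli group on $n$ qubits is $\mathcal{P}_n=\{\pm(P_1\otimes\cdots\otimes P_n)\mid P_i\in\{I,X,Z,XZ\}\}$. The real Clifford group (group of real stabilizer operators) on $n$ qubits is the normalizer of $\mathcal{P}_n$ in the orthogonal group: $\mathcal{C}_n=\{U\in O(2^n)\mid UPU^{-1}\in\mathcal{P}_n \text{ for all } P\in\mathcal{P}_n\}$. *)

theory Defs
  imports "Jordan_Normal_Form.Matrix"
begin

definition kron_mat :: "real mat \<Rightarrow> real mat \<Rightarrow> real mat" where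
  "kron_mat A B = mat (dim_row A * dim_row B) (dim_col A * dim_col B)
     (\<lambda>(i,j). A $$ (i div dim_row B, j div dim_col B) * B $$ (i mod dim_row B, j mod dim_col B))"

definition pauli_X :: "real mat" where
  "pauli_X = mat_of_rows_list 2 [[0,1],[1,0]]"

definition pauli_Z :: "real mat" where
  "pauli_Z = mat_of_rows_list 2 [[1,0],[0,-1]]"

definition pauli1 :: "real mat set" where
  "pauli1 = {1\<^sub>m 2, pauli_X, pauli_Z, pauli_X * pauli_Z}"

definition tensor_list :: "real mat list \<Rightarrow> real mat" where
  "tensor_list Ps = foldr kron_mat Ps (1\<^sub>m 1)"

definition real_pauli_group :: "nat \<Rightarrow> real mat set" where
  "real_pauli_group n = {s \<cdot>\<^sub>m tensor_list Ps | s Ps.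
      s \<in> {1, -1} \<and> length Ps = n \<and> set Ps \<subseteq> pauli1}"

definition orth_group :: "nat \<Rightarrow> real mat set" where
  "orth_group N = {U. U \<in> carrier_mat N N \<and> transpose_mat U * U = 1\<^sub>m N}"

text \<open>Real Clifford group: normalizer of the Pauli group in O(2^n);
  for orthogonal U, the inverse is its transpose.\<close>
definition real_clifford_group :: "nat \<Rightarrow> real mat set" where
  "real_clifford_group n = {U. U \<in> orth_group (2^n) \<and>
      (\<forall>P \<in> real_pauli_group n. U * P * transpose_mat U \<in> real_pauli_group n)}"

end

theory Submission
  imports Defs "Jordan_Normal_Form.Determinant"
begin

lemma sum2: "(\<Sum>i = (0::nat)..<2. f i) = (f 0 + f 1 :: 'a::comm_monoid_add)"
  by (simp add: numeral_2_eq_2)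

lemma less2: "(i::nat) < 2 \<Longrightarrow> i = 0 \<or> i = 1" by auto

lemma X_def2: "pauli_X = mat 2 2 (\<lambda>(i,j). if i = j then 0 else 1)"
  unfolding pauli_X_def mat_of_rows_list_def
  by (rule eq_matI) (auto dest!: less2)

lemma Z_def2: "pauli_Z = mat 2 2 (\<lambda>(i,j). if i = j then (if i = 0 then 1 else -1) else 0)"
  unfolding pauli_Z_def mat_of_rows_list_def
  by (rule eq_matI) (auto dest!: less2)

definition pauli_Y :: "real mat" where "pauli_Y = pauli_X * pauli_Z"

lemma Y_def2: "pauli_Y = mat 2 2 (\<lambda>(i,j). if i = j then 0 else (if i = 0 then -1 else 1))"
  unfolding pauli_Y_def X_def2 Z_def2
  by (rule eq_matI) (auto dest!: less2 simp: scalar_prod_def sum2)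

lemma I2_def2: "(1\<^sub>m 2 :: real mat) = mat 2 2 (\<lambda>(i,j). if i = j then 1 else 0)"
  by (rule eq_matI) auto

lemma kron_index:
  assumes "i < dim_row A * dim_row B" "j < dim_col A * dim_col B"
  shows "kron_mat A B $$ (i,j) = A $$ (i div dim_row B, j div dim_col B) * B $$ (i mod dim_row B, j mod dim_col B)"
  using assms unfolding kron_mat_def by simp

lemma kron_dim[simp]: "dim_row (kron_mat A B) = dim_row A * dim_row B" "dim_col (kron_mat A B) = dim_col A * dim_col B"
  unfolding kron_mat_def by auto

lemma kron_carrier[simp]: "A \<in> carrier_mat a b \<Longrightarrow> B \<in> carrier_mat c d \<Longrightarrow> kron_mat A B \<in> carrier_mat (a*c) (b*d)"
  unfolding carrier_mat_def by auto

lemma kron_four: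
  assumes Q: "Q \<in> carrier_mat 2 2" and P: "P \<in> carrier_mat N N"
  shows "kron_mat Q P = four_block_mat (Q$$(0,0) \<cdot>\<^sub>m P) (Q$$(0,1) \<cdot>\<^sub>m P) (Q$$(1,0) \<cdot>\<^sub>m P) (Q$$(1,1) \<cdot>\<^sub>m P)"
proof (rule eq_matI)
  fix i j assume i: "i < dim_row (four_block_mat (Q$$(0,0) \<cdot>\<^sub>m P) (Q$$(0,1) \<cdot>\<^sub>m P) (Q$$(1,0) \<cdot>\<^sub>m P) (Q$$(1,1) \<cdot>\<^sub>m P))"
    and j: "j < dim_col (four_block_mat (Q$$(0,0) \<cdot>\<^sub>m P) (Q$$(0,1) \<cdot>\<^sub>m P) (Q$$(1,0) \<cdot>\<^sub>m P) (Q$$(1,1) \<cdot>\<^sub>m P))"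
  have i2: "i < 2*N" and j2: "j < 2*N" using i j P by auto
  have d1: "i div N = (if i < N then 0 else 1)" "i mod N = (if i < N then i else i - N)"
    using i2 by (auto simp: div_if mod_if)
  have d2: "j div N = (if j < N then 0 else 1)" "j mod N = (if j < N then j else j - N)"
    using j2 by (auto simp: div_if mod_if)
  show "kron_mat Q P $$ (i, j) = four_block_mat (Q$$(0,0) \<cdot>\<^sub>m P) (Q$$(0,1) \<cdot>\<^sub>m P) (Q$$(1,0) \<cdot>\<^sub>m P) (Q$$(1,1) \<cdot>\<^sub>m P) $$ (i, j)"
    using i2 j2 Q P by (subst kron_index) (auto simp: d1 d2)
qed (use Q P in auto)


lemma kron_index2:
  assumes "A \<in> carrier_mat a b" "B \<in> carrier_mat c d" "i < a*c" "j < b*d"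
  shows "kron_mat A B $$ (i,j) = A $$ (i div c, j div d) * B $$ (i mod c, j mod d)"
  using assms unfolding kron_mat_def carrier_mat_def by simp

lemma div_bound: assumes "(i::nat) < a*b" shows "i div b < a" "i mod b < b"
proof -
  have "b > 0" using assms by (cases b) auto
  then show "i mod b < b" by simp
  show "i div b < a" using assms by (simp add: less_mult_imp_div_less)
qed

lemma kron_transpose: "transpose_mat (kron_mat A B) = kron_mat (transpose_mat A) (transpose_mat B)"
  by (rule eq_matI) (auto simp: kron_mat_def div_bound)

lemma kron_smult_right: "kron_mat A (c \<cdot>\<^sub>m B) = c \<cdot>\<^sub>m kron_mat A B"
  by (rule eq_matI) (auto simp: kron_mat_def div_bound)

lemma kron_smult_left: "kron_mat (c \<cdot>\<^sub>m A) B = c \<cdot>\<^sub>m kron_mat A B"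
  by (rule eq_matI) (auto simp: kron_mat_def div_bound)

lemma kron_uminus_right: "kron_mat A (- B) = - kron_mat A B"
  by (rule eq_matI) (auto simp: kron_mat_def div_bound)

lemma kron_uminus_left: "kron_mat (- A) B = - kron_mat A B"
  by (rule eq_matI) (auto simp: kron_mat_def div_bound)

lemma kron_one: "kron_mat (1\<^sub>m a) (1\<^sub>m b) = 1\<^sub>m (a*b)"
proof (rule eq_matI)
  fix i j assume "i < dim_row (1\<^sub>m (a * b) :: real mat)" "j < dim_col (1\<^sub>m (a * b) :: real mat)"
  then have ij: "i < a*b" "j < a*b" by auto
  then have b: "b > 0" by (cases b) auto
  have "(i div b = j div b \<and> i mod b = j mod b) = (i = j)"
    by (metis div_mult_mod_eq)
  moreover have "i div b < a" "j div b < a" using ij b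
    by (auto simp: less_mult_imp_div_less)
  ultimately show "kron_mat (1\<^sub>m a) (1\<^sub>m b) $$ (i, j) = 1\<^sub>m (a * b) $$ (i, j)"
    using ij b by (auto simp: kron_mat_def)
qed auto

lemma smult_neg1: "(-1::real) \<cdot>\<^sub>m A = - A"
  by (rule eq_matI) auto

lemma kron_mult:
  assumes Q: "Q \<in> carrier_mat 2 2" and Q': "Q' \<in> carrier_mat 2 2"
    and P: "P \<in> carrier_mat N N" and P': "P' \<in> carrier_mat N N"
  shows "kron_mat Q P * kron_mat Q' P' = kron_mat (Q * Q') (P * P')"
proof -
  have QQ: "Q * Q' \<in> carrier_mat 2 2" and PP: "P * P' \<in> carrier_mat N N" using Q Q' P P' by auto
  have e: "(a \<cdot>\<^sub>m P) * (b \<cdot>\<^sub>m P') + (c \<cdot>\<^sub>m P) * (d \<cdot>\<^sub>m P') = (a*b + c*d) \<cdot>\<^sub>m (P * P')" for a b c d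
    using P P' by (intro eq_matI) (auto simp: algebra_simps)
  have m: "(Q*Q') $$ (i,j) = Q$$(i,0) * Q'$$(0,j) + Q$$(i,1) * Q'$$(1,j)" if "i < 2" "j < 2" for i j
    using Q Q' that by (auto simp: scalar_prod_def sum2)
  show ?thesis
    unfolding kron_four[OF Q P] kron_four[OF Q' P'] kron_four[OF QQ PP]
    by (subst mult_four_block_mat[of _ N N _ N _ N _ _ N _ N]) (use P P' in \<open>auto simp: e m\<close>)
qed

lemma X_carrier[simp]: "pauli_X \<in> carrier_mat 2 2" by (simp add: X_def2)
lemma Z_carrier[simp]: "pauli_Z \<in> carrier_mat 2 2" by (simp add: Z_def2)
lemma Y_carrier[simp]: "pauli_Y \<in> carrier_mat 2 2" by (simp add: Y_def2)

lemma XX: "pauli_X * pauli_X = 1\<^sub>m 2" unfolding X_def2 by (rule eq_matI) (auto dest!: less2 simp: scalar_prod_def sum2)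
lemma ZZ: "pauli_Z * pauli_Z = 1\<^sub>m 2" unfolding Z_def2 by (rule eq_matI) (auto dest!: less2 simp: scalar_prod_def sum2)
lemma YY: "pauli_Y * pauli_Y = - 1\<^sub>m 2" unfolding Y_def2 by (rule eq_matI) (auto dest!: less2 simp: scalar_prod_def sum2)
lemma ZX: "pauli_Z * pauli_X = - pauli_Y" unfolding X_def2 Z_def2 Y_def2 by (rule eq_matI) (auto dest!: less2 simp: scalar_prod_def sum2)
lemma XY: "pauli_X * pauli_Y = pauli_Z" unfolding X_def2 Z_def2 Y_def2 by (rule eq_matI) (auto dest!: less2 simp: scalar_prod_def sum2)
lemma YX: "pauli_Y * pauli_X = - pauli_Z" unfolding X_def2 Z_def2 Y_def2 by (rule eq_matI) (auto dest!: less2 simp: scalar_prod_def sum2)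
lemma ZY: "pauli_Z * pauli_Y = - pauli_X" unfolding X_def2 Z_def2 Y_def2 by (rule eq_matI) (auto dest!: less2 simp: scalar_prod_def sum2)
lemma YZ: "pauli_Y * pauli_Z = pauli_X" unfolding X_def2 Z_def2 Y_def2 by (rule eq_matI) (auto dest!: less2 simp: scalar_prod_def sum2)
lemma XZ: "pauli_X * pauli_Z = pauli_Y" unfolding pauli_Y_def ..
lemma XT: "transpose_mat pauli_X = pauli_X" unfolding X_def2 by (rule eq_matI) auto
lemma ZT: "transpose_mat pauli_Z = pauli_Z" unfolding Z_def2 by (rule eq_matI) auto
lemma YT: "transpose_mat pauli_Y = - pauli_Y" unfolding Y_def2 by (rule eq_matI) auto

lemma pauli1_eq: "pauli1 = {1\<^sub>m 2, pauli_X, pauli_Z, pauli_Y}"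
  unfolding pauli1_def pauli_Y_def ..

lemma distinct_pauli1:
  "1\<^sub>m 2 \<noteq> pauli_X" "1\<^sub>m 2 \<noteq> pauli_Z" "1\<^sub>m 2 \<noteq> pauli_Y"
  "pauli_X \<noteq> pauli_Z" "pauli_X \<noteq> pauli_Y" "pauli_Z \<noteq> pauli_Y"
proof -
  have e: "(1\<^sub>m 2 :: real mat) $$ (0,0) = 1" "pauli_X $$ (0,0) = 0" "pauli_Z $$ (0,0) = 1" "pauli_Y $$ (0,0) = 0"
    "pauli_X $$ (0,1) = 1" "pauli_Y $$ (0,1) = -1" "pauli_Z $$ (1,1) = -1" "(1\<^sub>m 2 :: real mat) $$ (1,1) = 1"
    by (auto simp: X_def2 Z_def2 Y_def2)
  show "1\<^sub>m 2 \<noteq> pauli_X" using e by (metis zero_neq_one)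
  show "1\<^sub>m 2 \<noteq> pauli_Z" using e by (metis one_neq_neg_one)
  show "1\<^sub>m 2 \<noteq> pauli_Y" using e by (metis zero_neq_one)
  show "pauli_X \<noteq> pauli_Z" using e by (metis zero_neq_one)
  show "pauli_X \<noteq> pauli_Y" using e by (metis one_neq_neg_one)
  show "pauli_Z \<noteq> pauli_Y" using e by (metis zero_neq_one)
qed

lemma card_pauli1: "card pauli1 = 4"
  unfolding pauli1_eq using distinct_pauli1 by auto

lemma pauli1_carrier: "Q \<in> pauli1 \<Longrightarrow> Q \<in> carrier_mat 2 2"
  unfolding pauli1_eq by auto


lemma tensor_list_Cons: "tensor_list (Q # Ps) = kron_mat Q (tensor_list Ps)"
  unfolding tensor_list_def by simp

lemma smult_one1: "(1::real) \<cdot>\<^sub>m A = A" by (rule eq_matI) auto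

lemma dims_pauli[simp]: "dim_row pauli_X = 2" "dim_col pauli_X = 2" "dim_row pauli_Z = 2" "dim_col pauli_Z = 2"
  "dim_row pauli_Y = 2" "dim_col pauli_Y = 2"
  using X_carrier Z_carrier Y_carrier unfolding carrier_mat_def by auto

lemma pg_0: "real_pauli_group 0 = {1\<^sub>m 1, - 1\<^sub>m 1}"
  unfolding real_pauli_group_def tensor_list_def
  by (auto simp: smult_neg1 smult_one1 intro: exI[of _ 1] exI[of _ "-1"])

lemma pg_Suc: "real_pauli_group (Suc n) = {kron_mat Q P | Q P. Q \<in> pauli1 \<and> P \<in> real_pauli_group n}"
proof safe
  fix M assume "M \<in> real_pauli_group (Suc n)"
  then obtain s Ps where s: "s \<in> {1,-1}" and l: "length Ps = Suc n" and Ps: "set Ps \<subseteq> pauli1"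
    and M: "M = s \<cdot>\<^sub>m tensor_list Ps" unfolding real_pauli_group_def by auto
  from l obtain Q Ps' where Ps': "Ps = Q # Ps'" by (cases Ps) auto
  have "M = kron_mat Q (s \<cdot>\<^sub>m tensor_list Ps')" using M Ps' by (simp add: tensor_list_Cons kron_smult_right)
  moreover have "Q \<in> pauli1" using Ps Ps' by auto
  moreover have "s \<cdot>\<^sub>m tensor_list Ps' \<in> real_pauli_group n"
    unfolding real_pauli_group_def using s l Ps Ps' by auto
  ultimately show "\<exists>Q P. M = kron_mat Q P \<and> Q \<in> pauli1 \<and> P \<in> real_pauli_group n" by blast
next
  fix Q P assume Q: "Q \<in> pauli1" and P: "P \<in> real_pauli_group n"
  then obtain s Ps where s: "s \<in> {1,-1}" and l: "length Ps = n" and Ps: "set Ps \<subseteq> pauli1"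
    and M: "P = s \<cdot>\<^sub>m tensor_list Ps" unfolding real_pauli_group_def by auto
  have "kron_mat Q P = s \<cdot>\<^sub>m tensor_list (Q # Ps)" using M by (simp add: tensor_list_Cons kron_smult_right)
  then show "kron_mat Q P \<in> real_pauli_group (Suc n)"
    unfolding real_pauli_group_def using s l Ps Q by fastforce
qed

lemma pauli1_T: "Q \<in> pauli1 \<Longrightarrow> transpose_mat Q = Q \<or> transpose_mat Q = - Q"
  unfolding pauli1_eq using XT ZT YT by auto

lemma pauli1_orth: "Q \<in> pauli1 \<Longrightarrow> transpose_mat Q * Q = 1\<^sub>m 2"
  unfolding pauli1_eq using XT ZT YT XX ZZ YY by auto

lemma pauli1_mult: "Q \<in> pauli1 \<Longrightarrow> Q' \<in> pauli1 \<Longrightarrow> \<exists>Q''\<in>pauli1. Q * Q' = Q'' \<or> Q * Q' = - Q''"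
  unfolding pauli1_eq using XX ZZ YY XY YX XZ ZX YZ ZY
  by (auto simp: pauli_Y_def[symmetric])

lemma pauli1_comm: "Q \<in> pauli1 \<Longrightarrow> Q' \<in> pauli1 \<Longrightarrow> Q * Q' = Q' * Q \<or> Q * Q' = - (Q' * Q)"
  unfolding pauli1_eq using XX ZZ YY XY YX XZ ZX YZ ZY
  by (auto simp: pauli_Y_def[symmetric])


lemma one_T_neg: "transpose_mat (- 1\<^sub>m n :: real mat) = - 1\<^sub>m n"
  by (simp add: transpose_uminus)

lemma pg_uminus: "P \<in> real_pauli_group n \<Longrightarrow> - P \<in> real_pauli_group n"
proof -
  assume "P \<in> real_pauli_group n"
  then obtain s Ps where s: "s \<in> {1,-1}" and l: "length Ps = n" and Ps: "set Ps \<subseteq> pauli1"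
    and M: "P = s \<cdot>\<^sub>m tensor_list Ps" unfolding real_pauli_group_def by auto
  have "- P = (-s) \<cdot>\<^sub>m tensor_list Ps" using M by (intro eq_matI) auto
  then show ?thesis unfolding real_pauli_group_def using s l Ps by force
qed

lemma pg_props: "P \<in> real_pauli_group n \<Longrightarrow> P \<in> carrier_mat (2^n) (2^n) \<and> transpose_mat P * P = 1\<^sub>m (2^n)
   \<and> (transpose_mat P = P \<or> transpose_mat P = - P)"
proof (induction n arbitrary: P)
  case 0
  then show ?case by (auto simp: pg_0 transpose_uminus)
next
  case (Suc n)
  then obtain Q R where Q: "Q \<in> pauli1" and R: "R \<in> real_pauli_group n" and P: "P = kron_mat Q R"
    unfolding pg_Suc by auto
  have Rp: "R \<in> carrier_mat (2^n) (2^n)" "transpose_mat R * R = 1\<^sub>m (2^n)"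
    "transpose_mat R = R \<or> transpose_mat R = - R" using Suc.IH[OF R] by auto
  have Qc: "Q \<in> carrier_mat 2 2" using Q by (rule pauli1_carrier)
  have "P \<in> carrier_mat (2^Suc n) (2^Suc n)" using P Qc Rp by simp
  moreover have "transpose_mat P * P = 1\<^sub>m (2^Suc n)"
    unfolding P kron_transpose
    by (subst kron_mult[where N="2^n"]) (use Qc Rp pauli1_orth[OF Q] in \<open>auto simp: kron_one\<close>)
  moreover have "transpose_mat P = P \<or> transpose_mat P = - P"
    unfolding P kron_transpose using pauli1_T[OF Q] Rp(3)
    by (auto simp: kron_uminus_left kron_uminus_right)
  ultimately show ?case by blast
qed

lemma pg_carrier: "P \<in> real_pauli_group n \<Longrightarrow> P \<in> carrier_mat (2^n) (2^n)"
  using pg_props by blast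
lemma pg_orth: "P \<in> real_pauli_group n \<Longrightarrow> transpose_mat P * P = 1\<^sub>m (2^n)"
  using pg_props by blast
lemma pg_T: "P \<in> real_pauli_group n \<Longrightarrow> transpose_mat P = P \<or> transpose_mat P = - P"
  using pg_props by blast

lemma pg_one: "1\<^sub>m (2^n) \<in> real_pauli_group n"
proof (induction n)
  case 0 then show ?case by (simp add: pg_0)
next
  case (Suc n)
  have "kron_mat (1\<^sub>m 2) (1\<^sub>m (2^n)) \<in> real_pauli_group (Suc n)"
    unfolding pg_Suc using Suc pauli1_eq by blast
  then show ?case by (simp add: kron_one)
qed

lemma pg_mult: "P \<in> real_pauli_group n \<Longrightarrow> P' \<in> real_pauli_group n \<Longrightarrow> P * P' \<in> real_pauli_group n"
proof (induction n arbitrary: P P')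
  case 0
  then show ?case by (auto simp: pg_0)
next
  case (Suc n)
  from Suc.prems obtain Q R where Q: "Q \<in> pauli1" and R: "R \<in> real_pauli_group n" and P: "P = kron_mat Q R"
    unfolding pg_Suc by auto
  from Suc.prems obtain Q' R' where Q': "Q' \<in> pauli1" and R': "R' \<in> real_pauli_group n" and P': "P' = kron_mat Q' R'"
    unfolding pg_Suc by auto
  have "P * P' = kron_mat (Q * Q') (R * R')" unfolding P P'
    by (rule kron_mult) (use Q Q' R R' pauli1_carrier pg_carrier in auto)
  moreover obtain Q'' where Q'': "Q'' \<in> pauli1" "Q * Q' = Q'' \<or> Q * Q' = - Q''" using pauli1_mult[OF Q Q'] by auto
  moreover have "R * R' \<in> real_pauli_group n" "- (R * R') \<in> real_pauli_group n"
    using Suc.IH[OF R R'] pg_uminus by auto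
  ultimately have "\<exists>S\<in>real_pauli_group n. P * P' = kron_mat Q'' S"
    by (auto simp: kron_uminus_left kron_uminus_right[symmetric])
  then show ?case unfolding pg_Suc using Q'' by blast
qed

lemma pg_comm: "P \<in> real_pauli_group n \<Longrightarrow> P' \<in> real_pauli_group n \<Longrightarrow> P * P' = P' * P \<or> P * P' = - (P' * P)"
proof (induction n arbitrary: P P')
  case 0
  then show ?case by (auto simp: pg_0)
next
  case (Suc n)
  from Suc.prems obtain Q R where Q: "Q \<in> pauli1" and R: "R \<in> real_pauli_group n" and P: "P = kron_mat Q R"
    unfolding pg_Suc by auto
  from Suc.prems obtain Q' R' where Q': "Q' \<in> pauli1" and R': "R' \<in> real_pauli_group n" and P': "P' = kron_mat Q' R'"
    unfolding pg_Suc by auto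
  have c: "Q \<in> carrier_mat 2 2" "Q' \<in> carrier_mat 2 2" "R \<in> carrier_mat (2^n) (2^n)" "R' \<in> carrier_mat (2^n) (2^n)"
    using Q Q' R R' pauli1_carrier pg_carrier by auto
  have e1: "P * P' = kron_mat (Q * Q') (R * R')" unfolding P P' by (rule kron_mult) (use c in auto)
  have e2: "P' * P = kron_mat (Q' * Q) (R' * R)" unfolding P P' by (rule kron_mult) (use c in auto)
  show ?case unfolding e1 e2 using pauli1_comm[OF Q Q'] Suc.IH[OF R R']
    by (auto simp: kron_uminus_left kron_uminus_right)
qed

lemma pg_finite: "finite (real_pauli_group n)"
proof (induction n)
  case 0 then show ?case by (simp add: pg_0)
next
  case (Suc n)
  have "real_pauli_group (Suc n) = (\<lambda>(Q,P). kron_mat Q P) ` (pauli1 \<times> real_pauli_group n)"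
    unfolding pg_Suc by auto
  then show ?case using Suc by (simp add: pauli1_def)
qed


lemma pauli1_entries:
  "(1\<^sub>m 2 :: real mat) $$ (0,0) = 1" "(1\<^sub>m 2 :: real mat) $$ (0,1) = 0" "(1\<^sub>m 2 :: real mat) $$ (1,0) = 0" "(1\<^sub>m 2 :: real mat) $$ (1,1) = 1"
  "pauli_X $$ (0,0) = 0" "pauli_X $$ (0,1) = 1" "pauli_X $$ (1,0) = 1" "pauli_X $$ (1,1) = 0"
  "pauli_Z $$ (0,0) = 1" "pauli_Z $$ (0,1) = 0" "pauli_Z $$ (1,0) = 0" "pauli_Z $$ (1,1) = -1"
  "pauli_Y $$ (0,0) = 0" "pauli_Y $$ (0,1) = -1" "pauli_Y $$ (1,0) = 1" "pauli_Y $$ (1,1) = 0"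
  by (auto simp: X_def2 Z_def2 Y_def2)

lemma pauli1_entries_Suc:
  "(1\<^sub>m 2 :: real mat) $$ (0,0) = 1" "(1\<^sub>m 2 :: real mat) $$ (0,Suc 0) = 0" "(1\<^sub>m 2 :: real mat) $$ (Suc 0,0) = 0" "(1\<^sub>m 2 :: real mat) $$ (Suc 0,Suc 0) = 1"
  "pauli_X $$ (0,0) = 0" "pauli_X $$ (0,Suc 0) = 1" "pauli_X $$ (Suc 0,0) = 1" "pauli_X $$ (Suc 0,Suc 0) = 0"
  "pauli_Z $$ (0,0) = 1" "pauli_Z $$ (0,Suc 0) = 0" "pauli_Z $$ (Suc 0,0) = 0" "pauli_Z $$ (Suc 0,Suc 0) = -1"
  "pauli_Y $$ (0,0) = 0" "pauli_Y $$ (0,Suc 0) = -1" "pauli_Y $$ (Suc 0,0) = 1" "pauli_Y $$ (Suc 0,Suc 0) = 0"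
  by (auto simp: X_def2 Z_def2 Y_def2)

lemma pauli1_nz: "Q \<in> pauli1 \<Longrightarrow> \<exists>j<2. Q $$ (0,j) \<noteq> 0"
  unfolding pauli1_eq using pauli1_entries by (auto intro: exI[of _ 0] exI[of _ 1])

lemma kron_block_index:
  assumes Q: "Q \<in> carrier_mat 2 2" and P: "P \<in> carrier_mat N N" and "i < 2" "j < 2" "k < N" "l < N"
  shows "kron_mat Q P $$ (i*N+k, j*N+l) = Q $$ (i,j) * P $$ (k,l)"
proof -
  have a: "i*N+k < (i+1)*N" "j*N+l < (j+1)*N" using assms by auto
  have b: "(i+1)*N \<le> 2*N" "(j+1)*N \<le> 2*N" using assms by (intro mult_le_mono1; simp)+
  have "i*N+k < 2*N" "j*N+l < 2*N" using a b by linarith+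
  then show ?thesis using assms by (subst kron_index2[OF Q P]) auto
qed

lemma kron_cancel:
  assumes Q: "Q \<in> pauli1" and P: "P \<in> carrier_mat N N" and P': "P' \<in> carrier_mat N N"
    and e: "kron_mat Q P = kron_mat Q P'"
  shows "P = P'"
proof (rule eq_matI)
  obtain j where j: "j < 2" "Q $$ (0,j) \<noteq> 0" using pauli1_nz[OF Q] by auto
  have Qc: "Q \<in> carrier_mat 2 2" using Q pauli1_carrier by auto
  fix k l assume "k < dim_row P'" "l < dim_col P'"
  then have kl: "k < N" "l < N" using P' by auto
  have "Q $$ (0,j) * P $$ (k,l) = Q $$ (0,j) * P' $$ (k,l)"
    using kron_block_index[OF Qc P _ j(1) kl] kron_block_index[OF Qc P' _ j(1) kl] e by auto
  then show "P $$ (k,l) = P' $$ (k,l)" using j by auto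
qed (use P P' in auto)

lemma pg_nz: assumes "P \<in> real_pauli_group n" shows "\<exists>k l. k < 2^n \<and> l < 2^n \<and> P $$ (k,l) \<noteq> 0"
proof (rule ccontr)
  assume "\<not> ?thesis"
  then have "P = 0\<^sub>m (2^n) (2^n)" using pg_carrier[OF assms] by (intro eq_matI) auto
  then have "transpose_mat P * P = 0\<^sub>m (2^n) (2^n)" by (intro eq_matI) auto
  then have "(1\<^sub>m (2^n) :: real mat) = 0\<^sub>m (2^n) (2^n)" using pg_orth[OF assms] by simp
  then have "(1\<^sub>m (2^n) :: real mat) $$ (0,0) = 0\<^sub>m (2^n) (2^n) $$ (0,0)" by simp
  then show False by simp
qed

lemma pauli1_scal:
  assumes Q: "Q \<in> pauli1" and Q': "Q' \<in> pauli1" and c: "(c::real) \<noteq> 0"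
    and e: "\<And>i j. i < 2 \<Longrightarrow> j < 2 \<Longrightarrow> Q $$ (i,j) * c = Q' $$ (i,j) * d"
  shows "Q = Q'"
proof -
  have e00: "Q $$ (0,0) * c = Q' $$ (0,0) * d" and e01: "Q $$ (0,1) * c = Q' $$ (0,1) * d"
   and e10: "Q $$ (1,0) * c = Q' $$ (1,0) * d" and e11: "Q $$ (1,1) * c = Q' $$ (1,1) * d"
    by (rule e; simp)+
  show ?thesis using Q Q' e00 e01 e10 e11 c unfolding pauli1_eq
    apply (elim insertE emptyE)
    apply (simp_all add: pauli1_entries pauli1_entries_Suc)
    done
qed

lemma kron_inj:
  assumes Q: "Q \<in> pauli1" and Q': "Q' \<in> pauli1" and P: "P \<in> real_pauli_group n"
    and P': "P' \<in> carrier_mat (2^n) (2^n)"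
    and e: "kron_mat Q P = kron_mat Q' P'"
  shows "Q = Q' \<and> P = P'"
proof -
  obtain k l where kl: "k < 2^n" "l < 2^n" "P $$ (k,l) \<noteq> 0" using pg_nz[OF P] by auto
  have Pc: "P \<in> carrier_mat (2^n) (2^n)" using pg_carrier[OF P] .
  have Qc: "Q \<in> carrier_mat 2 2" "Q' \<in> carrier_mat 2 2" using Q Q' pauli1_carrier by auto
  have "Q $$ (i,j) * P $$ (k,l) = Q' $$ (i,j) * P' $$ (k,l)" if "i < 2" "j < 2" for i j
    using kron_block_index[OF Qc(1) Pc that kl(1,2)] kron_block_index[OF Qc(2) P' that kl(1,2)] e by auto
  then have "Q = Q'" using pauli1_scal[OF Q Q' kl(3)] by blast
  moreover then have "P = P'" using kron_cancel[OF Q Pc P'] e by simp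
  ultimately show ?thesis by simp
qed

lemma one_neq_neg_one_mat: "n > 0 \<Longrightarrow> (1\<^sub>m n :: real mat) \<noteq> - 1\<^sub>m n"
proof
  assume "n > 0" "(1\<^sub>m n :: real mat) = - 1\<^sub>m n"
  then have "(1\<^sub>m n :: real mat) $$ (0,0) = (- 1\<^sub>m n) $$ (0,0)" by simp
  with \<open>n > 0\<close> show False by simp
qed

lemma kron_inj_on: "inj_on (\<lambda>(Q,P). kron_mat Q P) (pauli1 \<times> real_pauli_group n)"
proof (rule inj_onI)
  fix x y assume x: "x \<in> pauli1 \<times> real_pauli_group n" and y: "y \<in> pauli1 \<times> real_pauli_group n"
    and e: "(case x of (Q, P) \<Rightarrow> kron_mat Q P) = (case y of (Q, P) \<Rightarrow> kron_mat Q P)"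
  obtain Q P Q' P' where xy: "x = (Q,P)" "y = (Q',P')" by (cases x, cases y) auto
  show "x = y" using kron_inj[of Q Q' P n P'] x y e pg_carrier unfolding xy by auto
qed

lemma card_pg: "card (real_pauli_group n) = 2 * 4^n"
proof (induction n)
  case 0 then show ?case by (simp add: pg_0 one_neq_neg_one_mat)
next
  case (Suc n)
  have "real_pauli_group (Suc n) = (\<lambda>(Q,P). kron_mat Q P) ` (pauli1 \<times> real_pauli_group n)"
    unfolding pg_Suc by auto
  then have "card (real_pauli_group (Suc n)) = card (pauli1 \<times> real_pauli_group n)"
    using kron_inj_on card_image by metis
  also have "\<dots> = 4 * (2 * 4^n)" using Suc card_pauli1 by (simp add: card_cartesian_product)
  finally show ?case by simp
qed


definition Sym :: "nat \<Rightarrow> real mat set" where "Sym n = {P \<in> real_pauli_group n. transpose_mat P = P}"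
definition Anti :: "nat \<Rightarrow> real mat set" where "Anti n = {P \<in> real_pauli_group n. transpose_mat P = - P}"

lemma neg_self_zero: assumes "(A::real mat) = - A" "i < dim_row A" "j < dim_col A" shows "A $$ (i,j) = 0"
proof -
  have "A $$ (i,j) = (- A) $$ (i,j)" using arg_cong[OF assms(1), of "\<lambda>M. M $$ (i,j)"] by simp
  also have "\<dots> = - A $$ (i,j)" using assms(2,3) by simp
  finally show ?thesis by simp
qed

lemma pauli1_not_neg: "Q \<in> pauli1 \<Longrightarrow> Q \<noteq> - Q"
proof
  assume Q: "Q \<in> pauli1" and e: "Q = - Q"
  obtain j where j: "j < 2" "Q $$ (0,j) \<noteq> 0" using pauli1_nz[OF Q] by auto
  have "Q $$ (0,j) = 0" using neg_self_zero[OF e, of 0 j] j pauli1_carrier[OF Q] by auto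
  with j show False by simp
qed

lemma pg_not_neg: "P \<in> real_pauli_group n \<Longrightarrow> P \<noteq> - P"
proof
  assume P: "P \<in> real_pauli_group n" and e: "P = - P"
  obtain k l where kl: "k < 2^n" "l < 2^n" "P $$ (k,l) \<noteq> 0" using pg_nz[OF P] by auto
  have "P $$ (k,l) = 0" using neg_self_zero[OF e, of k l] kl pg_carrier[OF P] by auto
  with kl show False by simp
qed

lemma Sym_Anti_disj: "Sym n \<inter> Anti n = {}"
  unfolding Sym_def Anti_def using pg_not_neg by fastforce

lemma Sym_Anti_Un: "Sym n \<union> Anti n = real_pauli_group n"
  unfolding Sym_def Anti_def using pg_T by blast

lemma kron_T_cases:
  assumes Q: "Q \<in> pauli1" and P: "P \<in> real_pauli_group n"
  shows "(transpose_mat (kron_mat Q P) = kron_mat Q P) \<longleftrightarrow>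
           (transpose_mat Q = Q \<and> transpose_mat P = P \<or> transpose_mat Q = - Q \<and> transpose_mat P = - P)"
proof -
  have Pc: "P \<in> carrier_mat (2^n) (2^n)" "transpose_mat P \<in> carrier_mat (2^n) (2^n)" "- transpose_mat P \<in> carrier_mat (2^n) (2^n)"
    using pg_carrier[OF P] by auto
  show ?thesis
  proof
    assume h: "transpose_mat (kron_mat Q P) = kron_mat Q P"
    show "transpose_mat Q = Q \<and> transpose_mat P = P \<or> transpose_mat Q = - Q \<and> transpose_mat P = - P"
    proof (cases "transpose_mat Q = Q")
      case True
      then have "kron_mat Q (transpose_mat P) = kron_mat Q P" using h by (simp add: kron_transpose)
      then show ?thesis using kron_cancel[OF Q Pc(2) Pc(1)] True by simp
    next
      case False
      then have QT: "transpose_mat Q = - Q" using pauli1_T[OF Q] by auto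
      then have "kron_mat Q (- transpose_mat P) = kron_mat Q P" using h
        by (simp add: kron_transpose kron_uminus_left kron_uminus_right)
      then have "- transpose_mat P = P" using kron_cancel[OF Q Pc(3) Pc(1)] by simp
      then show ?thesis using QT by (metis uminus_uminus_mat)
    qed
  next
    assume "transpose_mat Q = Q \<and> transpose_mat P = P \<or> transpose_mat Q = - Q \<and> transpose_mat P = - P"
    then show "transpose_mat (kron_mat Q P) = kron_mat Q P"
      by (auto simp: kron_transpose kron_uminus_left kron_uminus_right)
  qed
qed

lemma kron_T_cases_anti:
  assumes Q: "Q \<in> pauli1" and P: "P \<in> real_pauli_group n"
  shows "(transpose_mat (kron_mat Q P) = - kron_mat Q P) \<longleftrightarrow>
           (transpose_mat Q = Q \<and> transpose_mat P = - P \<or> transpose_mat Q = - Q \<and> transpose_mat P = P)"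
proof -
  have Pc: "P \<in> carrier_mat (2^n) (2^n)" "transpose_mat P \<in> carrier_mat (2^n) (2^n)" "- P \<in> carrier_mat (2^n) (2^n)"
    using pg_carrier[OF P] by auto
  show ?thesis
  proof
    assume h: "transpose_mat (kron_mat Q P) = - kron_mat Q P"
    show "transpose_mat Q = Q \<and> transpose_mat P = - P \<or> transpose_mat Q = - Q \<and> transpose_mat P = P"
    proof (cases "transpose_mat Q = Q")
      case True
      then have "kron_mat Q (transpose_mat P) = kron_mat Q (- P)" using h by (simp add: kron_transpose kron_uminus_right)
      then show ?thesis using kron_cancel[OF Q Pc(2) Pc(3)] True by simp
    next
      case False
      then have QT: "transpose_mat Q = - Q" using pauli1_T[OF Q] by auto
      then have "- kron_mat Q (transpose_mat P) = - kron_mat Q P" using h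
        by (simp add: kron_transpose kron_uminus_left)
      then have "kron_mat Q (transpose_mat P) = kron_mat Q P" by simp
      then have "transpose_mat P = P" using kron_cancel[OF Q Pc(2) Pc(1)] by simp
      then show ?thesis using QT by simp
    qed
  next
    assume "transpose_mat Q = Q \<and> transpose_mat P = - P \<or> transpose_mat Q = - Q \<and> transpose_mat P = P"
    then show "transpose_mat (kron_mat Q P) = - kron_mat Q P"
      by (auto simp: kron_transpose kron_uminus_left kron_uminus_right)
  qed
qed

lemma Q_sym_cases: "transpose_mat (1\<^sub>m 2 :: real mat) = 1\<^sub>m 2" "transpose_mat pauli_X = pauli_X"
  "transpose_mat pauli_Z = pauli_Z" "transpose_mat pauli_Y \<noteq> pauli_Y" "transpose_mat pauli_Y = - pauli_Y"
  "transpose_mat (1\<^sub>m 2 :: real mat) \<noteq> - 1\<^sub>m 2" "transpose_mat pauli_X \<noteq> - pauli_X" "transpose_mat pauli_Z \<noteq> - pauli_Z"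
proof -
  have "pauli_Y \<noteq> - pauli_Y" "(1\<^sub>m 2::real mat) \<noteq> - 1\<^sub>m 2" "pauli_X \<noteq> - pauli_X" "pauli_Z \<noteq> - pauli_Z"
    using pauli1_not_neg unfolding pauli1_eq by auto
  then show "transpose_mat (1\<^sub>m 2 :: real mat) = 1\<^sub>m 2" "transpose_mat pauli_X = pauli_X"
  "transpose_mat pauli_Z = pauli_Z" "transpose_mat pauli_Y \<noteq> pauli_Y" "transpose_mat pauli_Y = - pauli_Y"
  "transpose_mat (1\<^sub>m 2 :: real mat) \<noteq> - 1\<^sub>m 2" "transpose_mat pauli_X \<noteq> - pauli_X" "transpose_mat pauli_Z \<noteq> - pauli_Z"
    using XT ZT YT by (auto dest: sym)
qed

lemma Sym_Suc: "Sym (Suc n) = (\<lambda>(Q,P). kron_mat Q P) ` ({1\<^sub>m 2, pauli_X, pauli_Z} \<times> Sym n \<union> {pauli_Y} \<times> Anti n)"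
proof (intro equalityI subsetI)
  fix M assume "M \<in> Sym (Suc n)"
  then obtain Q P where Q: "Q \<in> pauli1" and P: "P \<in> real_pauli_group n" and M: "M = kron_mat Q P"
    and T: "transpose_mat M = M" unfolding Sym_def pg_Suc by auto
  have c: "transpose_mat Q = Q \<and> transpose_mat P = P \<or> transpose_mat Q = - Q \<and> transpose_mat P = - P"
    using kron_T_cases[OF Q P] T M by simp
  show "M \<in> (\<lambda>(Q,P). kron_mat Q P) ` ({1\<^sub>m 2, pauli_X, pauli_Z} \<times> Sym n \<union> {pauli_Y} \<times> Anti n)"
    using Q c P Q_sym_cases unfolding M Sym_def Anti_def pauli1_eq by (auto intro!: image_eqI)
next
  fix M assume "M \<in> (\<lambda>(Q,P). kron_mat Q P) ` ({1\<^sub>m 2, pauli_X, pauli_Z} \<times> Sym n \<union> {pauli_Y} \<times> Anti n)"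
  then obtain Q P where QPm: "(Q, P) \<in> {1\<^sub>m 2, pauli_X, pauli_Z} \<times> Sym n \<union> {pauli_Y} \<times> Anti n" and M: "M = kron_mat Q P" by auto
  from QPm have QP: "Q \<in> pauli1" "P \<in> real_pauli_group n" and
    c: "transpose_mat Q = Q \<and> transpose_mat P = P \<or> transpose_mat Q = - Q \<and> transpose_mat P = - P"
    unfolding Sym_def Anti_def pauli1_eq using Q_sym_cases by auto
  then show "M \<in> Sym (Suc n)"
    unfolding M Sym_def pg_Suc using kron_T_cases[OF QP] by auto
qed

lemma Anti_Suc: "Anti (Suc n) = (\<lambda>(Q,P). kron_mat Q P) ` ({1\<^sub>m 2, pauli_X, pauli_Z} \<times> Anti n \<union> {pauli_Y} \<times> Sym n)"
proof (intro equalityI subsetI)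
  fix M assume "M \<in> Anti (Suc n)"
  then obtain Q P where Q: "Q \<in> pauli1" and P: "P \<in> real_pauli_group n" and M: "M = kron_mat Q P"
    and T: "transpose_mat M = - M" unfolding Anti_def pg_Suc by auto
  have c: "transpose_mat Q = Q \<and> transpose_mat P = - P \<or> transpose_mat Q = - Q \<and> transpose_mat P = P"
    using kron_T_cases_anti[OF Q P] T M by simp
  show "M \<in> (\<lambda>(Q,P). kron_mat Q P) ` ({1\<^sub>m 2, pauli_X, pauli_Z} \<times> Anti n \<union> {pauli_Y} \<times> Sym n)"
    using Q c P Q_sym_cases unfolding M Sym_def Anti_def pauli1_eq by (auto intro!: image_eqI)
next
  fix M assume "M \<in> (\<lambda>(Q,P). kron_mat Q P) ` ({1\<^sub>m 2, pauli_X, pauli_Z} \<times> Anti n \<union> {pauli_Y} \<times> Sym n)"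
  then obtain Q P where QPm: "(Q, P) \<in> {1\<^sub>m 2, pauli_X, pauli_Z} \<times> Anti n \<union> {pauli_Y} \<times> Sym n" and M: "M = kron_mat Q P" by auto
  from QPm have QP: "Q \<in> pauli1" "P \<in> real_pauli_group n" and
    c: "transpose_mat Q = Q \<and> transpose_mat P = - P \<or> transpose_mat Q = - Q \<and> transpose_mat P = P"
    unfolding Sym_def Anti_def pauli1_eq using Q_sym_cases by auto
  then show "M \<in> Anti (Suc n)"
    unfolding M Anti_def pg_Suc using kron_T_cases_anti[OF QP] by auto
qed

lemma card_split: assumes "finite S" "finite T"
  shows "card ({1\<^sub>m 2, pauli_X, pauli_Z} \<times> S \<union> {pauli_Y} \<times> T) = 3 * card S + card T"
proof -
  have "card ({1\<^sub>m 2, pauli_X, pauli_Z} \<times> S \<union> {pauli_Y} \<times> T) = card ({1\<^sub>m 2, pauli_X, pauli_Z} \<times> S) + card ({pauli_Y} \<times> T)"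
    by (rule card_Un_disjoint) (use assms distinct_pauli1 in auto)
  moreover have "card {1\<^sub>m 2, pauli_X, pauli_Z} = 3" using distinct_pauli1 by auto
  ultimately show ?thesis by (simp add: card_cartesian_product)
qed

lemma Sym_Anti_sub: "{1\<^sub>m 2, pauli_X, pauli_Z} \<times> S \<union> {pauli_Y} \<times> T \<subseteq> pauli1 \<times> real_pauli_group n"
  if "S \<subseteq> real_pauli_group n" "T \<subseteq> real_pauli_group n" for S T
  using that unfolding pauli1_eq by auto

lemma card_Sym_Anti: "card (Sym n) = 4^n + 2^n \<and> card (Anti n) + 2^n = 4^n"
proof (induction n)
  case 0
  have "Sym 0 = real_pauli_group 0" "Anti 0 = {}"
    unfolding Sym_def Anti_def pg_0 using one_neq_neg_one_mat[of 1] by (auto simp: transpose_uminus)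
  then show ?case using card_pg[of 0] by simp
next
  case (Suc n)
  have fin: "finite (Sym n)" "finite (Anti n)" using pg_finite unfolding Sym_def Anti_def by auto
  have sub: "Sym n \<subseteq> real_pauli_group n" "Anti n \<subseteq> real_pauli_group n" unfolding Sym_def Anti_def by auto
  have "card (Sym (Suc n)) = 3 * card (Sym n) + card (Anti n)"
    unfolding Sym_Suc
    by (subst card_image[OF inj_on_subset[OF kron_inj_on Sym_Anti_sub[OF sub]]]) (rule card_split[OF fin])
  moreover have "card (Anti (Suc n)) = 3 * card (Anti n) + card (Sym n)"
    unfolding Anti_Suc
    by (subst card_image[OF inj_on_subset[OF kron_inj_on Sym_Anti_sub[OF sub(2) sub(1)]]]) (rule card_split[OF fin(2) fin(1)])
  ultimately show ?case using Suc.IH by auto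
qed


lemma mult_sq: "A \<in> carrier_mat N N \<Longrightarrow> B \<in> carrier_mat N N \<Longrightarrow> A * B \<in> carrier_mat N N"
  by auto
lemma sq_assoc: "A \<in> carrier_mat N N \<Longrightarrow> B \<in> carrier_mat N N \<Longrightarrow> C \<in> carrier_mat N N \<Longrightarrow> (A * B) * C = A * (B * (C::real mat))"
  by simp
lemma T_sq: "A \<in> carrier_mat N N \<Longrightarrow> transpose_mat A \<in> carrier_mat N N" by auto
lemma neg_sq: "A \<in> carrier_mat N N \<Longrightarrow> - A \<in> carrier_mat N N" by auto
lemma one_sq: "(1\<^sub>m N :: real mat) \<in> carrier_mat N N" by auto
lemma one_l: "A \<in> carrier_mat N N \<Longrightarrow> 1\<^sub>m N * (A::real mat) = A" by auto
lemma one_r: "A \<in> carrier_mat N N \<Longrightarrow> (A::real mat) * 1\<^sub>m N = A" by auto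
lemma cancel_l: "A \<in> carrier_mat N N \<Longrightarrow> B \<in> carrier_mat N N \<Longrightarrow> C \<in> carrier_mat N N \<Longrightarrow> A * B = 1\<^sub>m N \<Longrightarrow> A * (B * (C::real mat)) = C"
  by (metis sq_assoc one_l)
lemma neg_l: "A \<in> carrier_mat N N \<Longrightarrow> B \<in> carrier_mat N N \<Longrightarrow> (- A) * (B::real mat) = - (A * B)" by auto
lemma neg_r: "A \<in> carrier_mat N N \<Longrightarrow> B \<in> carrier_mat N N \<Longrightarrow> A * (- B::real mat) = - (A * B)" by auto
lemma T_mult: "A \<in> carrier_mat N N \<Longrightarrow> B \<in> carrier_mat N N \<Longrightarrow> transpose_mat (A * (B::real mat)) = transpose_mat B * transpose_mat A"
  by (rule transpose_mult) auto

lemma orth_right: assumes "U \<in> carrier_mat N N" "transpose_mat U * U = (1\<^sub>m N :: real mat)"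
  shows "U * transpose_mat U = 1\<^sub>m N"
  using mat_mult_left_right_inverse[of "transpose_mat U" N U] assms by auto

lemma cl_iff: "U \<in> real_clifford_group n \<longleftrightarrow> U \<in> carrier_mat (2^n) (2^n) \<and> transpose_mat U * U = 1\<^sub>m (2^n)
   \<and> (\<forall>P\<in>real_pauli_group n. U * P * transpose_mat U \<in> real_pauli_group n)"
  unfolding real_clifford_group_def orth_group_def by auto

lemma cl_carrier: "U \<in> real_clifford_group n \<Longrightarrow> U \<in> carrier_mat (2^n) (2^n)"
  using cl_iff by blast
lemma cl_orth: "U \<in> real_clifford_group n \<Longrightarrow> transpose_mat U * U = 1\<^sub>m (2^n)"
  using cl_iff by blast
lemma cl_orth2: "U \<in> real_clifford_group n \<Longrightarrow> U * transpose_mat U = 1\<^sub>m (2^n)"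
  using cl_iff orth_right by blast
lemma cl_conj: "U \<in> real_clifford_group n \<Longrightarrow> P \<in> real_pauli_group n \<Longrightarrow> U * P * transpose_mat U \<in> real_pauli_group n"
  using cl_iff by blast

lemmas sq = sq_assoc mult_sq T_sq neg_sq one_l one_r neg_l neg_r

lemma conj_mult:
  assumes U: "U \<in> carrier_mat N N" "transpose_mat U * U = 1\<^sub>m N" and A: "A \<in> carrier_mat N N" and B: "B \<in> carrier_mat N N"
  shows "(U * A * transpose_mat U) * (U * B * transpose_mat U) = U * (A * B) * transpose_mat (U::real mat)"
  using U A B by (simp add: sq_assoc[of _ N] mult_sq[of _ N] T_sq[of _ N] cancel_l[of _ N])

lemma conj_T:
  assumes U: "U \<in> carrier_mat N N" and A: "A \<in> carrier_mat N N"
  shows "transpose_mat (U * A * transpose_mat U) = U * transpose_mat A * transpose_mat (U::real mat)"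
  using U A by (simp add: T_mult[of _ N] sq_assoc[of _ N] mult_sq[of _ N] T_sq[of _ N])

lemma conj_neg:
  assumes U: "U \<in> carrier_mat N N" and A: "A \<in> carrier_mat N N"
  shows "U * (- A) * transpose_mat U = - (U * A * transpose_mat (U::real mat))"
  using U A by (simp add: neg_l[of _ N] neg_r[of _ N] mult_sq[of _ N] T_sq[of _ N] neg_sq[of _ N])

lemma conj_inv:
  assumes U: "U \<in> carrier_mat N N" "transpose_mat U * U = 1\<^sub>m N" and A: "A \<in> carrier_mat N N"
  shows "transpose_mat U * (U * A * transpose_mat U) * U = (A::real mat)"
  using U A by (simp add: sq_assoc[of _ N] mult_sq[of _ N] T_sq[of _ N] cancel_l[of _ N] one_r[of _ N])

lemma cl_one: "1\<^sub>m (2^n) \<in> real_clifford_group n"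
proof -
  have "1\<^sub>m (2^n) * P * transpose_mat (1\<^sub>m (2^n)) = P" if "P \<in> real_pauli_group n" for P
    using pg_carrier[OF that] by simp
  then show ?thesis unfolding cl_iff by auto
qed

lemma cl_mult: assumes U: "U \<in> real_clifford_group n" and V: "V \<in> real_clifford_group n"
  shows "U * V \<in> real_clifford_group n"
proof -
  note c = cl_carrier[OF U] cl_carrier[OF V] cl_orth[OF U] cl_orth[OF V]
  have "transpose_mat (U * V) * (U * V) = 1\<^sub>m (2^n)"
    using c by (simp add: T_mult[of _ "2^n"] sq_assoc[of _ "2^n"] mult_sq[of _ "2^n"] T_sq[of _ "2^n"] cancel_l[of _ "2^n"])
  moreover have "U * V * P * transpose_mat (U * V) \<in> real_pauli_group n" if P: "P \<in> real_pauli_group n" for P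
  proof -
    have Pc: "P \<in> carrier_mat (2^n) (2^n)" using pg_carrier[OF P] .
    have "U * V * P * transpose_mat (U * V) = U * (V * P * transpose_mat V) * transpose_mat U"
      using c Pc by (simp add: T_mult[of _ "2^n"] sq_assoc[of _ "2^n"] mult_sq[of _ "2^n"] T_sq[of _ "2^n"])
    then show ?thesis using cl_conj[OF U cl_conj[OF V P]] by simp
  qed
  ultimately show ?thesis unfolding cl_iff using c by auto
qed

lemma cl_T: assumes U: "U \<in> real_clifford_group n"
  shows "transpose_mat U \<in> real_clifford_group n"
proof -
  note c = cl_carrier[OF U] cl_orth[OF U] cl_orth2[OF U]
  let ?f = "\<lambda>P. U * P * transpose_mat U"
  have inj: "inj_on ?f (real_pauli_group n)"
  proof (rule inj_onI)
    fix P Q assume P: "P \<in> real_pauli_group n" and Q: "Q \<in> real_pauli_group n" and e: "?f P = ?f Q"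
    have "P = transpose_mat U * ?f P * U" by (rule conj_inv[OF c(1,2) pg_carrier[OF P], symmetric])
    also have "\<dots> = transpose_mat U * ?f Q * U" by (simp only: e)
    also have "\<dots> = Q" by (rule conj_inv[OF c(1,2) pg_carrier[OF Q]])
    finally show "P = Q" .
  qed
  have sub: "?f ` real_pauli_group n \<subseteq> real_pauli_group n" using cl_conj[OF U] by auto
  have eq: "?f ` real_pauli_group n = real_pauli_group n"
    by (rule card_subset_eq[OF pg_finite sub]) (rule card_image[OF inj])
  have "transpose_mat U * P * transpose_mat (transpose_mat U) \<in> real_pauli_group n" if P: "P \<in> real_pauli_group n" for P
  proof -
    have "P \<in> ?f ` real_pauli_group n" using P eq by (simp only:)
    then obtain Q where Q: "Q \<in> real_pauli_group n" and PQ: "P = ?f Q" by (rule imageE)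
    have "transpose_mat U * P * transpose_mat (transpose_mat U) = Q"
      unfolding PQ transpose_transpose by (rule conj_inv[OF c(1,2) pg_carrier[OF Q]])
    then show ?thesis using Q by simp
  qed
  then show ?thesis unfolding cl_iff using c by auto
qed


lemma zero_smult1: "A \<in> carrier_mat N M \<Longrightarrow> (0::real) \<cdot>\<^sub>m A = 0\<^sub>m N M"
  by (rule eq_matI) auto

lemma kron_I_fb: "R \<in> carrier_mat N N \<Longrightarrow> kron_mat (1\<^sub>m 2) R = four_block_mat R (0\<^sub>m N N) (0\<^sub>m N N) R"
  by (subst kron_four[where N=N]) (auto simp: zero_smult1 smult_one1)
lemma kron_X_fb: "R \<in> carrier_mat N N \<Longrightarrow> kron_mat pauli_X R = four_block_mat (0\<^sub>m N N) R R (0\<^sub>m N N)"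
  by (subst kron_four[where N=N]) (auto simp: zero_smult1 smult_one1 pauli1_entries pauli1_entries_Suc)
lemma kron_Z_fb: "R \<in> carrier_mat N N \<Longrightarrow> kron_mat pauli_Z R = four_block_mat R (0\<^sub>m N N) (0\<^sub>m N N) (- R)"
  by (subst kron_four[where N=N]) (auto simp: zero_smult1 smult_one1 smult_neg1 pauli1_entries pauli1_entries_Suc)
lemma kron_Y_fb: "R \<in> carrier_mat N N \<Longrightarrow> kron_mat pauli_Y R = four_block_mat (0\<^sub>m N N) (- R) R (0\<^sub>m N N)"
  by (subst kron_four[where N=N]) (auto simp: zero_smult1 smult_one1 smult_neg1 pauli1_entries pauli1_entries_Suc)

lemma pauli1_partner: "Q \<in> pauli1 \<Longrightarrow> Q \<noteq> 1\<^sub>m 2 \<Longrightarrow> \<exists>Q'\<in>pauli1. Q * Q' = - (Q' * Q)"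
  unfolding pauli1_eq using XZ ZX XY YX by (auto intro: bexI[of _ pauli_X] bexI[of _ pauli_Z])

lemma partner:
  assumes "P \<in> real_pauli_group n" "P \<noteq> 1\<^sub>m (2^n)" "P \<noteq> - 1\<^sub>m (2^n)"
  shows "\<exists>S\<in>real_pauli_group n. P * S = - (S * P)"
  using assms
proof (induction n arbitrary: P)
  case 0
  then show ?case by (auto simp: pg_0)
next
  case (Suc n)
  from Suc.prems obtain Q R where Q: "Q \<in> pauli1" and R: "R \<in> real_pauli_group n" and P: "P = kron_mat Q R"
    unfolding pg_Suc by auto
  have Qc: "Q \<in> carrier_mat 2 2" using pauli1_carrier[OF Q] .
  have Rc: "R \<in> carrier_mat (2^n) (2^n)" using pg_carrier[OF R] .
  show ?case
  proof (cases "Q = 1\<^sub>m 2")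
    case False
    then obtain Q' where Q': "Q' \<in> pauli1" "Q * Q' = - (Q' * Q)" using pauli1_partner[OF Q] by auto
    have Q'c: "Q' \<in> carrier_mat 2 2" using pauli1_carrier[OF Q'(1)] .
    let ?S = "kron_mat Q' (1\<^sub>m (2^n))"
    have "?S \<in> real_pauli_group (Suc n)" unfolding pg_Suc using Q'(1) pg_one by blast
    moreover have "P * ?S = - (?S * P)"
      unfolding P using Qc Q'c Rc Q'(2)
      by (simp add: kron_mult[where N="2^n"] kron_uminus_left)
    ultimately show ?thesis by blast
  next
    case True
    have "R \<noteq> 1\<^sub>m (2^n)" using Suc.prems(2) P True by (auto simp: kron_one)
    moreover have "R \<noteq> - 1\<^sub>m (2^n)" using Suc.prems(3) P True by (auto simp: kron_one kron_uminus_right)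
    ultimately obtain S where S: "S \<in> real_pauli_group n" "R * S = - (S * R)" using Suc.IH[OF R] by auto
    let ?S = "kron_mat (1\<^sub>m 2) S"
    have "?S \<in> real_pauli_group (Suc n)" unfolding pg_Suc using S(1) pauli1_eq by blast
    moreover have "P * ?S = - (?S * P)"
      unfolding P True using Rc pg_carrier[OF S(1)] S(2)
      by (simp add: kron_mult[where N="2^n"] kron_uminus_right)
    ultimately show ?thesis by blast
  qed
qed


lemma fb_mult:
  assumes "A1 \<in> carrier_mat N N" "B1 \<in> carrier_mat N N" "C1 \<in> carrier_mat N N" "D1 \<in> carrier_mat N N"
    "A2 \<in> carrier_mat N N" "B2 \<in> carrier_mat N N" "C2 \<in> carrier_mat N N" "D2 \<in> carrier_mat N N"
  shows "four_block_mat A1 B1 C1 D1 * four_block_mat A2 B2 C2 D2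
    = four_block_mat (A1 * A2 + B1 * C2) (A1 * B2 + B1 * D2) (C1 * A2 + D1 * C2) (C1 * B2 + D1 * D2)"
  by (rule mult_four_block_mat) (use assms in auto)

lemma fb_T:
  assumes "A \<in> carrier_mat N N" "B \<in> carrier_mat N N" "C \<in> carrier_mat N N" "D \<in> carrier_mat N N"
  shows "transpose_mat (four_block_mat A B C D) = four_block_mat (transpose_mat A) (transpose_mat C) (transpose_mat B) (transpose_mat D)"
  by (rule transpose_four_block_mat) (use assms in auto)

definition cp :: "nat \<Rightarrow> real mat \<Rightarrow> real mat" where
  "cp N P = four_block_mat (1\<^sub>m N) (0\<^sub>m N N) (0\<^sub>m N N) P"

lemma cp_T: "P \<in> carrier_mat N N \<Longrightarrow> transpose_mat (cp N P) = cp N (transpose_mat P)"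
  unfolding cp_def by (subst fb_T[where N=N]) auto

lemma cp_carrier: "P \<in> carrier_mat N N \<Longrightarrow> cp N P \<in> carrier_mat (N+N) (N+N)"
  unfolding cp_def by auto

lemma cp_left: assumes "P \<in> carrier_mat N N" "A \<in> carrier_mat N N" "B \<in> carrier_mat N N" "C \<in> carrier_mat N N" "D \<in> carrier_mat N N"
  shows "cp N P * four_block_mat A B C D = four_block_mat A B (P * C) (P * D)"
  unfolding cp_def using assms by (subst fb_mult[where N=N]) auto

lemma cp_right: assumes "P \<in> carrier_mat N N" "A \<in> carrier_mat N N" "B \<in> carrier_mat N N" "C \<in> carrier_mat N N" "D \<in> carrier_mat N N"
  shows "four_block_mat A B C D * cp N P = four_block_mat A (B * P) C (D * P)"
  unfolding cp_def using assms by (subst fb_mult[where N=N]) auto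

lemma cp_conj: assumes P: "P \<in> carrier_mat N N" and c: "A \<in> carrier_mat N N" "B \<in> carrier_mat N N" "C \<in> carrier_mat N N" "D \<in> carrier_mat N N"
  shows "cp N P * four_block_mat A B C D * transpose_mat (cp N P)
     = four_block_mat A (B * transpose_mat P) (P * C) (P * D * transpose_mat P)"
  using assms by (simp add: cp_left cp_right cp_T)

lemma cp_mult: assumes "P \<in> carrier_mat N N" "P' \<in> carrier_mat N N" shows "cp N P * cp N P' = cp N (P * P')"
proof -
  have "cp N P * cp N P' = four_block_mat (1\<^sub>m N) (0\<^sub>m N N) (P * 0\<^sub>m N N) (P * P')"
    unfolding cp_def[of N P'] by (rule cp_left) (use assms in auto)
  then show ?thesis using assms by (simp add: cp_def)
qed

lemma pow_Suc2: "(2::nat)^Suc n = 2^n + 2^n" by simp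

lemma in_pg_Suc: "Q \<in> pauli1 \<Longrightarrow> S \<in> real_pauli_group n \<Longrightarrow> kron_mat Q S \<in> real_pauli_group (Suc n)"
  unfolding pg_Suc by blast

lemma pauli1_I: "1\<^sub>m 2 \<in> pauli1" and pauli1_X: "pauli_X \<in> pauli1" and pauli1_Z: "pauli_Z \<in> pauli1" and pauli1_Y: "pauli_Y \<in> pauli1"
  unfolding pauli1_eq by auto


lemma pg_facts:
  assumes P: "P \<in> real_pauli_group n"
  shows "P \<in> carrier_mat (2^n) (2^n)" "transpose_mat P \<in> carrier_mat (2^n) (2^n)"
    "dim_row P = 2^n" "dim_col P = 2^n" "dim_row (transpose_mat P) = 2^n" "dim_col (transpose_mat P) = 2^n"
    "P * transpose_mat P = 1\<^sub>m (2^n)" "transpose_mat P * P = 1\<^sub>m (2^n)"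
  using pg_carrier[OF P] pg_orth[OF P] orth_right[OF pg_carrier[OF P] pg_orth[OF P]] by auto

lemma cp_conj_pauli:
  assumes P: "P \<in> real_pauli_group n" and R: "R \<in> real_pauli_group n" and Q: "Q \<in> pauli1"
  shows "cp (2^n) P * kron_mat Q R * transpose_mat (cp (2^n) P) \<in> real_pauli_group (Suc n)"
proof -
  let ?N = "(2::nat)^n"
  note fP = pg_facts[OF P] and fR = pg_facts[OF R]
  have RP: "R * P \<in> real_pauli_group n" "- (R * P) \<in> real_pauli_group n" using pg_mult[OF R P] pg_uminus by auto
  have RPc: "R * P \<in> carrier_mat ?N ?N" using fP fR by auto
  have f1: "P * R = R * P \<or> P * R = - (R * P)" using pg_comm[OF P R] .
  have f2: "R * transpose_mat P = R * P \<or> R * transpose_mat P = - (R * P)" using pg_T[OF P] fP fR by auto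
  have f3: "P * R * transpose_mat P = R" if "P * R = R * P"
  proof -
    have "P * R * transpose_mat P = R * P * transpose_mat P" using that by simp
    also have "\<dots> = R * (P * transpose_mat P)" using fP fR by (intro assoc_mult_mat) auto
    finally show ?thesis using fP fR by simp
  qed
  have f4: "P * R * transpose_mat P = - R" if "P * R = - (R * P)"
  proof -
    have "P * R * transpose_mat P = - (R * P) * transpose_mat P" using that by simp
    also have "\<dots> = - (R * P * transpose_mat P)" using fP fR by (intro uminus_mult_left_mat) auto
    also have "R * P * transpose_mat P = R * (P * transpose_mat P)" using fP fR by (intro assoc_mult_mat) auto
    finally show ?thesis using fP fR by simp
  qed
  have z: "0\<^sub>m ?N ?N * transpose_mat P = 0\<^sub>m ?N ?N" "P * 0\<^sub>m ?N ?N = 0\<^sub>m ?N ?N" "P * 0\<^sub>m ?N ?N * transpose_mat P = 0\<^sub>m ?N ?N"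
    using fP by auto
  have nR: "P * (- R) * transpose_mat P = - (P * R * transpose_mat P)" "P * - R = - (P * R)" "- R * transpose_mat P = - (R * transpose_mat P)"
    using fP fR by auto
  have Rc: "R \<in> carrier_mat ?N ?N" "- R \<in> carrier_mat ?N ?N" using fR by auto
  have pI: "kron_mat (1\<^sub>m 2) S \<in> real_pauli_group (Suc n)" "kron_mat pauli_X S \<in> real_pauli_group (Suc n)"
    "kron_mat pauli_Z S \<in> real_pauli_group (Suc n)" "kron_mat pauli_Y S \<in> real_pauli_group (Suc n)"
    if "S \<in> real_pauli_group n" for S
    using in_pg_Suc[OF _ that] pauli1_I pauli1_X pauli1_Z pauli1_Y by auto
  have cj: "cp ?N P * four_block_mat A B C D * transpose_mat (cp ?N P)
     = four_block_mat A (B * transpose_mat P) (P * C) (P * D * transpose_mat P)"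
    if "A \<in> carrier_mat ?N ?N" "B \<in> carrier_mat ?N ?N" "C \<in> carrier_mat ?N ?N" "D \<in> carrier_mat ?N ?N" for A B C D
    using cp_conj[OF fP(1) that] .
  consider "Q = 1\<^sub>m 2" | "Q = pauli_X" | "Q = pauli_Z" | "Q = pauli_Y" using Q unfolding pauli1_eq by auto
  then show ?thesis
  proof cases
    case 1
    have e: "cp ?N P * kron_mat Q R * transpose_mat (cp ?N P) = four_block_mat R (0\<^sub>m ?N ?N) (0\<^sub>m ?N ?N) (P * R * transpose_mat P)"
      unfolding 1 kron_I_fb[OF Rc(1)] by (subst cj) (use Rc z in auto)
    show ?thesis using f1
    proof
      assume a: "P * R = R * P"
      show ?thesis unfolding e f3[OF a] kron_I_fb[OF Rc(1), symmetric] using pI(1)[OF R] .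
    next
      assume a: "P * R = - (R * P)"
      show ?thesis unfolding e f4[OF a] kron_Z_fb[OF Rc(1), symmetric] using pI(3)[OF R] .
    qed
  next
    case 3
    have e: "cp ?N P * kron_mat Q R * transpose_mat (cp ?N P) = four_block_mat R (0\<^sub>m ?N ?N) (0\<^sub>m ?N ?N) (- (P * R * transpose_mat P))"
      unfolding 3 kron_Z_fb[OF Rc(1)] by (subst cj) (use Rc z nR in auto)
    show ?thesis using f1
    proof
      assume a: "P * R = R * P"
      show ?thesis unfolding e f3[OF a] kron_Z_fb[OF Rc(1), symmetric] using pI(3)[OF R] .
    next
      assume a: "P * R = - (R * P)"
      show ?thesis unfolding e f4[OF a] uminus_uminus_mat kron_I_fb[OF Rc(1), symmetric] using pI(1)[OF R] .
    qed
  next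
    case 2
    have e: "cp ?N P * kron_mat Q R * transpose_mat (cp ?N P) = four_block_mat (0\<^sub>m ?N ?N) (R * transpose_mat P) (P * R) (0\<^sub>m ?N ?N)"
      unfolding 2 kron_X_fb[OF Rc(1)] by (subst cj) (use Rc z in auto)
    from f1 f2 show ?thesis
    proof (elim disjE)
      assume a: "P * R = R * P" "R * transpose_mat P = R * P"
      show ?thesis unfolding e a kron_X_fb[OF RPc, symmetric] using pI(2)[OF RP(1)] .
    next
      assume a: "P * R = R * P" "R * transpose_mat P = - (R * P)"
      show ?thesis unfolding e a kron_Y_fb[OF RPc, symmetric] using pI(4)[OF RP(1)] .
    next
      assume a: "P * R = - (R * P)" "R * transpose_mat P = R * P"
      have "four_block_mat (0\<^sub>m ?N ?N) (R * P) (- (R * P)) (0\<^sub>m ?N ?N) = kron_mat pauli_Y (- (R * P))"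
        using kron_Y_fb[of "- (R * P)" ?N] RPc by simp
      then show ?thesis unfolding e a using pI(4)[OF RP(2)] by simp
    next
      assume a: "P * R = - (R * P)" "R * transpose_mat P = - (R * P)"
      have "four_block_mat (0\<^sub>m ?N ?N) (- (R * P)) (- (R * P)) (0\<^sub>m ?N ?N) = kron_mat pauli_X (- (R * P))"
        using kron_X_fb[of "- (R * P)" ?N] RPc by simp
      then show ?thesis unfolding e a using pI(2)[OF RP(2)] by simp
    qed
  next
    case 4
    have e: "cp ?N P * kron_mat Q R * transpose_mat (cp ?N P) = four_block_mat (0\<^sub>m ?N ?N) (- (R * transpose_mat P)) (P * R) (0\<^sub>m ?N ?N)"
      unfolding 4 kron_Y_fb[OF Rc(1)] by (subst cj) (use Rc z nR in auto)
    from f1 f2 show ?thesis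
    proof (elim disjE)
      assume a: "P * R = R * P" "R * transpose_mat P = R * P"
      show ?thesis unfolding e a kron_Y_fb[OF RPc, symmetric] using pI(4)[OF RP(1)] .
    next
      assume a: "P * R = R * P" "R * transpose_mat P = - (R * P)"
      show ?thesis unfolding e a uminus_uminus_mat kron_X_fb[OF RPc, symmetric] using pI(2)[OF RP(1)] .
    next
      assume a: "P * R = - (R * P)" "R * transpose_mat P = R * P"
      have "four_block_mat (0\<^sub>m ?N ?N) (- (R * P)) (- (R * P)) (0\<^sub>m ?N ?N) = kron_mat pauli_X (- (R * P))"
        using kron_X_fb[of "- (R * P)" ?N] RPc by simp
      then show ?thesis unfolding e a using pI(2)[OF RP(2)] by simp
    next
      assume a: "P * R = - (R * P)" "R * transpose_mat P = - (R * P)"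
      have "four_block_mat (0\<^sub>m ?N ?N) (R * P) (- (R * P)) (0\<^sub>m ?N ?N) = kron_mat pauli_Y (- (R * P))"
        using kron_Y_fb[of "- (R * P)" ?N] RPc by simp
      then show ?thesis unfolding e a uminus_uminus_mat using pI(4)[OF RP(2)] by simp
    qed
  qed
qed


lemma cp_cl: assumes P: "P \<in> real_pauli_group n" shows "cp (2^n) P \<in> real_clifford_group (Suc n)"
proof -
  note fP = pg_facts[OF P]
  have c: "cp (2^n) P \<in> carrier_mat (2^Suc n) (2^Suc n)" using cp_carrier[OF fP(1)] by (simp add: mult_2)
  have "transpose_mat (cp (2^n) P) * cp (2^n) P = cp (2^n) (1\<^sub>m (2^n))"
    using fP by (simp add: cp_T cp_mult)
  also have "\<dots> = 1\<^sub>m (2^Suc n)" unfolding cp_def by (simp add: mult_2)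
  finally have o: "transpose_mat (cp (2^n) P) * cp (2^n) P = 1\<^sub>m (2^Suc n)" .
  have "cp (2^n) P * M * transpose_mat (cp (2^n) P) \<in> real_pauli_group (Suc n)" if M: "M \<in> real_pauli_group (Suc n)" for M
  proof -
    obtain Q R where "Q \<in> pauli1" "R \<in> real_pauli_group n" "M = kron_mat Q R" using M unfolding pg_Suc by auto
    then show ?thesis using cp_conj_pauli[OF P] by auto
  qed
  then show ?thesis unfolding cl_iff using c o by auto
qed

lemma cp_Z1: assumes P: "P \<in> real_pauli_group n"
  shows "cp (2^n) P * kron_mat pauli_Z (1\<^sub>m (2^n)) * transpose_mat (cp (2^n) P) = kron_mat pauli_Z (1\<^sub>m (2^n))"
proof -
  note fP = pg_facts[OF P]
  have "cp (2^n) P * kron_mat pauli_Z (1\<^sub>m (2^n)) * transpose_mat (cp (2^n) P)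
     = four_block_mat (1\<^sub>m (2^n)) (0\<^sub>m (2^n) (2^n) * transpose_mat P) (P * 0\<^sub>m (2^n) (2^n)) (P * (- 1\<^sub>m (2^n)) * transpose_mat P)"
    unfolding kron_Z_fb[OF one_carrier_mat] by (rule cp_conj) (use fP in auto)
  also have "\<dots> = four_block_mat (1\<^sub>m (2^n)) (0\<^sub>m (2^n) (2^n)) (0\<^sub>m (2^n) (2^n)) (- 1\<^sub>m (2^n))"
    using fP by simp
  finally show ?thesis unfolding kron_Z_fb[OF one_carrier_mat] .
qed

lemma cp_X1: assumes P: "P \<in> real_pauli_group n"
  shows "cp (2^n) P * kron_mat pauli_X (1\<^sub>m (2^n)) * transpose_mat (cp (2^n) P) =
    (if transpose_mat P = P then kron_mat pauli_X P else kron_mat pauli_Y P)"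
proof -
  note fP = pg_facts[OF P]
  have "cp (2^n) P * kron_mat pauli_X (1\<^sub>m (2^n)) * transpose_mat (cp (2^n) P)
     = four_block_mat (0\<^sub>m (2^n) (2^n)) (1\<^sub>m (2^n) * transpose_mat P) (P * 1\<^sub>m (2^n)) (P * 0\<^sub>m (2^n) (2^n) * transpose_mat P)"
    unfolding kron_X_fb[OF one_carrier_mat] by (rule cp_conj) (use fP in auto)
  also have "\<dots> = four_block_mat (0\<^sub>m (2^n) (2^n)) (transpose_mat P) P (0\<^sub>m (2^n) (2^n))"
    using fP by simp
  finally have e: "cp (2^n) P * kron_mat pauli_X (1\<^sub>m (2^n)) * transpose_mat (cp (2^n) P) =
     four_block_mat (0\<^sub>m (2^n) (2^n)) (transpose_mat P) P (0\<^sub>m (2^n) (2^n))" .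
  show ?thesis
  proof (cases "transpose_mat P = P")
    case True
    then show ?thesis unfolding e using kron_X_fb[OF fP(1)] by simp
  next
    case False
    then have "transpose_mat P = - P" using pg_T[OF P] by auto
    then show ?thesis unfolding e using kron_Y_fb[OF fP(1)] False by simp
  qed
qed

lemma cp_IZ: assumes P: "P \<in> real_pauli_group n" and S: "S \<in> real_pauli_group n" and a: "S * P = - (P * S)"
  shows "cp (2^n) S * kron_mat pauli_Z P * transpose_mat (cp (2^n) S) = kron_mat (1\<^sub>m 2) P"
proof -
  note fP = pg_facts[OF P] and fS = pg_facts[OF S]
  have "cp (2^n) S * kron_mat pauli_Z P * transpose_mat (cp (2^n) S)
     = four_block_mat P (0\<^sub>m (2^n) (2^n) * transpose_mat S) (S * 0\<^sub>m (2^n) (2^n)) (S * (- P) * transpose_mat S)"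
    unfolding kron_Z_fb[OF fP(1)] by (rule cp_conj) (use fP fS in auto)
  also have "S * (- P) * transpose_mat S = P"
  proof -
    have "S * (- P) * transpose_mat S = - (S * P) * transpose_mat S" using fP fS by simp
    also have "\<dots> = P * S * transpose_mat S" using a by simp
    also have "\<dots> = P * (S * transpose_mat S)" using fP fS by (intro assoc_mult_mat) auto
    finally show ?thesis using fP fS by simp
  qed
  also have "four_block_mat P (0\<^sub>m (2^n) (2^n) * transpose_mat S) (S * 0\<^sub>m (2^n) (2^n)) P = kron_mat (1\<^sub>m 2) P"
    using fS kron_I_fb[OF fP(1)] by simp
  finally show ?thesis .
qed


definition hh :: real where "hh = 1 / sqrt 2"
lemma hh_sq: "hh * hh = 1/2" unfolding hh_def by (simp add: field_simps)
lemma hh_sq2: "hh * (hh * 2) = 1" using hh_sq by (simp add: algebra_simps)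

definition H2 :: "real mat" where "H2 = mat 2 2 (\<lambda>(i,j). if i = 1 \<and> j = 1 then - hh else hh)"

lemma H2_carrier: "H2 \<in> carrier_mat 2 2" unfolding H2_def by auto
lemma H2_T: "transpose_mat H2 = H2" unfolding H2_def by (rule eq_matI) auto

lemma H2_sq: "H2 * H2 = 1\<^sub>m 2"
  unfolding H2_def by (rule eq_matI) (auto dest!: less2 simp: scalar_prod_def sum2 hh_sq)

lemma H2_X: "H2 * pauli_X * H2 = pauli_Z"
  unfolding H2_def X_def2 Z_def2 by (rule eq_matI) (auto dest!: less2 simp: scalar_prod_def sum2 hh_sq hh_sq2 algebra_simps)
lemma H2_Z: "H2 * pauli_Z * H2 = pauli_X"
  unfolding H2_def X_def2 Z_def2 by (rule eq_matI) (auto dest!: less2 simp: scalar_prod_def sum2 hh_sq hh_sq2 algebra_simps)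
lemma H2_Y: "H2 * pauli_Y * H2 = - pauli_Y"
  unfolding H2_def Y_def2 by (rule eq_matI) (auto dest!: less2 simp: scalar_prod_def sum2 hh_sq hh_sq2 algebra_simps)
lemma H2_I: "H2 * 1\<^sub>m 2 * H2 = 1\<^sub>m 2"
  using H2_sq H2_carrier by simp

definition hg :: "nat \<Rightarrow> real mat" where "hg n = kron_mat H2 (1\<^sub>m (2^n))"

lemma hg_T: "transpose_mat (hg n) = hg n"
  unfolding hg_def kron_transpose H2_T by simp

lemma hg_carrier: "hg n \<in> carrier_mat (2^Suc n) (2^Suc n)"
  unfolding hg_def using H2_carrier by simp

lemma hg_conj: assumes Q: "Q \<in> carrier_mat 2 2" and R: "R \<in> carrier_mat (2^n) (2^n)"
  shows "hg n * kron_mat Q R * transpose_mat (hg n) = kron_mat (H2 * Q * H2) R"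
proof -
  have "hg n * kron_mat Q R = kron_mat (H2 * Q) (1\<^sub>m (2^n) * R)"
    unfolding hg_def by (rule kron_mult) (use Q R H2_carrier in auto)
  also have "1\<^sub>m (2^n) * R = R" using R by simp
  finally have "hg n * kron_mat Q R * transpose_mat (hg n) = kron_mat (H2 * Q) R * kron_mat H2 (1\<^sub>m (2^n))"
    unfolding hg_T by (simp add: hg_def)
  also have "\<dots> = kron_mat (H2 * Q * H2) (R * 1\<^sub>m (2^n))"
    by (rule kron_mult) (use Q R H2_carrier in auto)
  finally show ?thesis using R by simp
qed

lemma hg_cl: "hg n \<in> real_clifford_group (Suc n)"
proof -
  have o: "transpose_mat (hg n) * hg n = 1\<^sub>m (2^Suc n)"
  proof -
    have "transpose_mat (hg n) * hg n = kron_mat (H2 * H2) (1\<^sub>m (2^n) * 1\<^sub>m (2^n))"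
      unfolding hg_T unfolding hg_def by (rule kron_mult) (use H2_carrier in auto)
    then show ?thesis by (simp add: H2_sq kron_one)
  qed
  have "hg n * M * transpose_mat (hg n) \<in> real_pauli_group (Suc n)" if M: "M \<in> real_pauli_group (Suc n)" for M
  proof -
    obtain Q R where Q: "Q \<in> pauli1" and R: "R \<in> real_pauli_group n" and MQ: "M = kron_mat Q R" using M unfolding pg_Suc by auto
    have e: "hg n * M * transpose_mat (hg n) = kron_mat (H2 * Q * H2) R"
      unfolding MQ by (rule hg_conj[OF pauli1_carrier[OF Q] pg_carrier[OF R]])
    consider "Q = 1\<^sub>m 2" | "Q = pauli_X" | "Q = pauli_Z" | "Q = pauli_Y" using Q unfolding pauli1_eq by auto
    then show ?thesis
    proof cases
      case 1 then show ?thesis unfolding e using H2_I in_pg_Suc[OF pauli1_I R] by simp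
    next
      case 2 then show ?thesis unfolding e using H2_X in_pg_Suc[OF pauli1_Z R] by simp
    next
      case 3 then show ?thesis unfolding e using H2_Z in_pg_Suc[OF pauli1_X R] by simp
    next
      case 4 then show ?thesis unfolding e using H2_Y in_pg_Suc[OF pauli1_Y pg_uminus[OF R]]
        by (simp add: kron_uminus_left kron_uminus_right)
    qed
  qed
  then show ?thesis unfolding cl_iff using o hg_carrier by auto
qed

lemma hg_Z1: "hg n * kron_mat pauli_Z (1\<^sub>m (2^n)) * transpose_mat (hg n) = kron_mat pauli_X (1\<^sub>m (2^n))"
  using hg_conj[OF Z_carrier, of "1\<^sub>m (2^n)" n] H2_Z by simp

lemma hg_X: "R \<in> carrier_mat (2^n) (2^n) \<Longrightarrow> hg n * kron_mat pauli_X R * transpose_mat (hg n) = kron_mat pauli_Z R"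
  using hg_conj[OF X_carrier, of R n] H2_X by simp


abbreviation Z1 :: "nat \<Rightarrow> real mat" where "Z1 n \<equiv> kron_mat pauli_Z (1\<^sub>m (2^n))"
abbreviation X1 :: "nat \<Rightarrow> real mat" where "X1 n \<equiv> kron_mat pauli_X (1\<^sub>m (2^n))"

lemma Z1_pg: "Z1 n \<in> real_pauli_group (Suc n)" using in_pg_Suc[OF pauli1_Z pg_one] .
lemma X1_pg: "X1 n \<in> real_pauli_group (Suc n)" using in_pg_Suc[OF pauli1_X pg_one] .

lemma conj_comp: assumes U: "U \<in> real_clifford_group m" and V: "V \<in> real_clifford_group m"
  and A: "A \<in> carrier_mat (2^m) (2^m)"
  shows "(U * V) * A * transpose_mat (U * V) = U * (V * A * transpose_mat V) * transpose_mat U"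
  using cl_carrier[OF U] cl_carrier[OF V] A
  by (simp add: T_mult[of _ "2^m"] sq_assoc[of _ "2^m"] mult_sq[of _ "2^m"] T_sq[of _ "2^m"])

lemma T1:
  assumes A: "A \<in> Sym (Suc n)" and A1: "A \<noteq> 1\<^sub>m (2^Suc n)" and A2: "A \<noteq> - 1\<^sub>m (2^Suc n)"
  shows "\<exists>U\<in>real_clifford_group (Suc n). U * Z1 n * transpose_mat U = A"
proof -
  obtain Q P where Q: "Q \<in> pauli1" and P: "P \<in> real_pauli_group n" and AQ: "A = kron_mat Q P"
    using A unfolding Sym_def pg_Suc by auto
  have TA: "transpose_mat Q = Q \<and> transpose_mat P = P \<or> transpose_mat Q = - Q \<and> transpose_mat P = - P"
    using kron_T_cases[OF Q P] A AQ unfolding Sym_def by simp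
  note fP = pg_facts[OF P]
  have hgZ: "hg n * Z1 n * transpose_mat (hg n) = X1 n" by (rule hg_Z1)
  have Z1c: "Z1 n \<in> carrier_mat (2^Suc n) (2^Suc n)" using pg_carrier[OF Z1_pg] .
  have U1: "cp (2^n) P * hg n \<in> real_clifford_group (Suc n)" using cl_mult[OF cp_cl[OF P] hg_cl] .
  have e1: "(cp (2^n) P * hg n) * Z1 n * transpose_mat (cp (2^n) P * hg n) =
     (if transpose_mat P = P then kron_mat pauli_X P else kron_mat pauli_Y P)"
    unfolding conj_comp[OF cp_cl[OF P] hg_cl Z1c] hgZ by (rule cp_X1[OF P])
  have U2: "hg n * (cp (2^n) P * hg n) \<in> real_clifford_group (Suc n)" using cl_mult[OF hg_cl U1] .
  have e2: "transpose_mat P = P \<Longrightarrow> (hg n * (cp (2^n) P * hg n)) * Z1 n * transpose_mat (hg n * (cp (2^n) P * hg n)) =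
     kron_mat pauli_Z P"
    unfolding conj_comp[OF hg_cl U1 Z1c] e1 using hg_X[OF fP(1)] by simp
  consider "Q = 1\<^sub>m 2" | "Q = pauli_X" | "Q = pauli_Z" | "Q = pauli_Y" using Q unfolding pauli1_eq by auto
  then show ?thesis
  proof cases
    case 2
    then have "transpose_mat P = P" using TA Q_sym_cases by auto
    then show ?thesis using U1 e1 AQ 2 by auto
  next
    case 4
    then have "transpose_mat P = - P" using TA Q_sym_cases by auto
    then have "transpose_mat P \<noteq> P" using pg_not_neg[OF P] by auto
    then show ?thesis using U1 e1 AQ 4 by auto
  next
    case 3
    then have "transpose_mat P = P" using TA Q_sym_cases by auto
    then show ?thesis using U2 e2 AQ 3 by auto
  next
    case 1
    then have PT: "transpose_mat P = P" using TA Q_sym_cases by auto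
    have "P \<noteq> 1\<^sub>m (2^n)" using A1 AQ 1 by (auto simp: kron_one)
    moreover have "P \<noteq> - 1\<^sub>m (2^n)" using A2 AQ 1 by (auto simp: kron_one kron_uminus_right)
    ultimately obtain S where S: "S \<in> real_pauli_group n" "P * S = - (S * P)" using partner[OF P] by auto
    have SP: "S * P = - (P * S)" using S(2) by simp
    have U3: "cp (2^n) S * (hg n * (cp (2^n) P * hg n)) \<in> real_clifford_group (Suc n)"
      using cl_mult[OF cp_cl[OF S(1)] U2] .
    have "(cp (2^n) S * (hg n * (cp (2^n) P * hg n))) * Z1 n * transpose_mat (cp (2^n) S * (hg n * (cp (2^n) P * hg n)))
       = kron_mat (1\<^sub>m 2) P"
      unfolding conj_comp[OF cp_cl[OF S(1)] U2 Z1c] e2[OF PT] by (rule cp_IZ[OF P S(1) SP])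
    then show ?thesis using U3 AQ 1 by auto
  qed
qed

lemma Bset_char:
  "{B \<in> Sym (Suc n). Z1 n * B = - (B * Z1 n)} = kron_mat pauli_X ` Sym n \<union> kron_mat pauli_Y ` Anti n"
proof (intro equalityI subsetI)
  fix B assume "B \<in> {B \<in> Sym (Suc n). Z1 n * B = - (B * Z1 n)}"
  then have B: "B \<in> Sym (Suc n)" and ac: "Z1 n * B = - (B * Z1 n)" by auto
  obtain Q P where Q: "Q \<in> pauli1" and P: "P \<in> real_pauli_group n" and BQ: "B = kron_mat Q P"
    using B unfolding Sym_def pg_Suc by auto
  have TB: "transpose_mat Q = Q \<and> transpose_mat P = P \<or> transpose_mat Q = - Q \<and> transpose_mat P = - P"
    using kron_T_cases[OF Q P] B BQ unfolding Sym_def by simp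
  note fP = pg_facts[OF P]
  have Qc: "Q \<in> carrier_mat 2 2" using pauli1_carrier[OF Q] .
  have m1: "Z1 n * B = kron_mat (pauli_Z * Q) P" unfolding BQ
    using kron_mult[OF Z_carrier Qc one_carrier_mat fP(1)] fP by simp
  have m2: "B * Z1 n = kron_mat (Q * pauli_Z) P" unfolding BQ
    using kron_mult[OF Qc Z_carrier fP(1) one_carrier_mat] fP by simp
  consider "Q = 1\<^sub>m 2" | "Q = pauli_X" | "Q = pauli_Z" | "Q = pauli_Y" using Q unfolding pauli1_eq by auto
  then show "B \<in> kron_mat pauli_X ` Sym n \<union> kron_mat pauli_Y ` Anti n"
  proof cases
    case 1
    then have "kron_mat pauli_Z P = - kron_mat pauli_Z P" using ac m1 m2 by simp
    then show ?thesis using pg_not_neg[OF in_pg_Suc[OF pauli1_Z P]] by simp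
  next
    case 3
    then have "kron_mat (1\<^sub>m 2) P = - kron_mat (1\<^sub>m 2) P" using ac m1 m2 ZZ by simp
    then show ?thesis using pg_not_neg[OF in_pg_Suc[OF pauli1_I P]] by simp
  next
    case 2
    then have "transpose_mat P = P" using TB Q_sym_cases by auto
    then show ?thesis using P BQ 2 unfolding Sym_def by auto
  next
    case 4
    then have "transpose_mat P = - P" using TB Q_sym_cases by auto
    then show ?thesis using P BQ 4 unfolding Anti_def by auto
  qed
next
  fix B assume B: "B \<in> kron_mat pauli_X ` Sym n \<union> kron_mat pauli_Y ` Anti n"
  then obtain Q P where QP: "Q = pauli_X \<and> P \<in> Sym n \<or> Q = pauli_Y \<and> P \<in> Anti n" and BQ: "B = kron_mat Q P" by auto
  then have P: "P \<in> real_pauli_group n" and Q: "Q \<in> pauli1" unfolding Sym_def Anti_def pauli1_eq by auto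
  note fP = pg_facts[OF P]
  have Qc: "Q \<in> carrier_mat 2 2" using pauli1_carrier[OF Q] .
  have m1: "Z1 n * B = kron_mat (pauli_Z * Q) P" unfolding BQ
    using kron_mult[OF Z_carrier Qc one_carrier_mat fP(1)] fP by simp
  have m2: "B * Z1 n = kron_mat (Q * pauli_Z) P" unfolding BQ
    using kron_mult[OF Qc Z_carrier fP(1) one_carrier_mat] fP by simp
  have "Z1 n * B = - (B * Z1 n)" unfolding m1 m2 using QP ZX XZ ZY YZ
    by (auto simp: kron_uminus_left)
  moreover have "B \<in> Sym (Suc n)" unfolding Sym_def BQ using in_pg_Suc[OF Q P] kron_T_cases[OF Q P] QP Q_sym_cases
    unfolding Sym_def Anti_def by auto
  ultimately show "B \<in> {B \<in> Sym (Suc n). Z1 n * B = - (B * Z1 n)}" by auto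
qed

lemma card_Bset_Z1: "card {B \<in> Sym (Suc n). Z1 n * B = - (B * Z1 n)} = 2 * 4^n"
proof -
  have fin: "finite (Sym n)" "finite (Anti n)" using pg_finite unfolding Sym_def Anti_def by auto
  have inj: "inj_on (kron_mat Q) (real_pauli_group n)" if "Q \<in> pauli1" for Q
    by (rule inj_onI) (use kron_cancel[OF that] pg_carrier in blast)
  have i1: "card (kron_mat pauli_X ` Sym n) = card (Sym n)"
    by (rule card_image, rule inj_on_subset[OF inj[OF pauli1_X]]) (auto simp: Sym_def)
  have i2: "card (kron_mat pauli_Y ` Anti n) = card (Anti n)"
    by (rule card_image, rule inj_on_subset[OF inj[OF pauli1_Y]]) (auto simp: Anti_def)
  have disj: "kron_mat pauli_X ` Sym n \<inter> kron_mat pauli_Y ` Anti n = {}"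
  proof -
    have "kron_mat pauli_X P \<noteq> kron_mat pauli_Y P'" if "P \<in> Sym n" "P' \<in> Anti n" for P P'
    proof
      assume "kron_mat pauli_X P = kron_mat pauli_Y P'"
      then have "pauli_X = pauli_Y" using kron_inj[OF pauli1_X pauli1_Y, of P n P'] that pg_carrier
        unfolding Sym_def Anti_def by auto
      then show False using distinct_pauli1 by auto
    qed
    then show ?thesis by auto
  qed
  have "card {B \<in> Sym (Suc n). Z1 n * B = - (B * Z1 n)} = card (Sym n) + card (Anti n)"
    unfolding Bset_char by (subst card_Un_disjoint) (use fin disj i1 i2 in auto)
  also have "\<dots> = card (real_pauli_group n)"
    using card_Un_disjoint[OF fin Sym_Anti_disj] Sym_Anti_Un by simp
  finally show ?thesis using card_pg by simp
qed


lemma T2: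
  assumes B: "B \<in> Sym (Suc n)" and ac: "Z1 n * B = - (B * Z1 n)"
  shows "\<exists>U\<in>real_clifford_group (Suc n). U * Z1 n * transpose_mat U = Z1 n \<and> U * X1 n * transpose_mat U = B"
proof -
  have "B \<in> kron_mat pauli_X ` Sym n \<union> kron_mat pauli_Y ` Anti n" using Bset_char[of n] B ac by auto
  then obtain P where P: "P \<in> real_pauli_group n" and
    c: "(transpose_mat P = P \<and> B = kron_mat pauli_X P) \<or> (transpose_mat P = - P \<and> B = kron_mat pauli_Y P)"
    unfolding Sym_def Anti_def by auto
  have "cp (2^n) P * X1 n * transpose_mat (cp (2^n) P) = B"
    unfolding cp_X1[OF P] using c pg_not_neg[OF P] by auto
  then show ?thesis using cp_cl[OF P] cp_Z1[OF P] by auto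
qed

lemma fb_inj:
  assumes c: "A \<in> carrier_mat N N" "B \<in> carrier_mat N N" "C \<in> carrier_mat N N" "D \<in> carrier_mat N N"
    "A' \<in> carrier_mat N N" "B' \<in> carrier_mat N N" "C' \<in> carrier_mat N N" "D' \<in> carrier_mat N N"
    and e: "four_block_mat A B C D = four_block_mat A' B' C' D'"
  shows "A = A' \<and> B = B' \<and> C = C' \<and> D = D'"
proof -
  have ix: "four_block_mat A B C D $$ (i,j) = four_block_mat A' B' C' D' $$ (i,j)" for i j using e by simp
  have "A = A'"
  proof (rule eq_matI)
    fix i j assume "i < dim_row A'" "j < dim_col A'"
    then show "A $$ (i,j) = A' $$ (i,j)" using ix[of i j] c by auto
  qed (use c in auto)
  moreover have "B = B'"
  proof (rule eq_matI)
    fix i j assume "i < dim_row B'" "j < dim_col B'"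
    then show "B $$ (i,j) = B' $$ (i,j)" using ix[of i "j + N"] c by auto
  qed (use c in auto)
  moreover have "C = C'"
  proof (rule eq_matI)
    fix i j assume "i < dim_row C'" "j < dim_col C'"
    then show "C $$ (i,j) = C' $$ (i,j)" using ix[of "i + N" j] c by auto
  qed (use c in auto)
  moreover have "D = D'"
  proof (rule eq_matI)
    fix i j assume "i < dim_row D'" "j < dim_col D'"
    then show "D $$ (i,j) = D' $$ (i,j)" using ix[of "i + N" "j + N"] c by auto
  qed (use c in auto)
  ultimately show ?thesis by simp
qed

lemma neg_self_zero_mat: assumes "B \<in> carrier_mat N N" "(B::real mat) = - B" shows "B = 0\<^sub>m N N"
  by (rule eq_matI) (use assms neg_self_zero[OF assms(2)] in auto)

lemma kronI_cl: assumes V: "V \<in> real_clifford_group n"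
  shows "kron_mat (1\<^sub>m 2) V \<in> real_clifford_group (Suc n)"
    "kron_mat (1\<^sub>m 2) V * Z1 n * transpose_mat (kron_mat (1\<^sub>m 2) V) = Z1 n"
    "kron_mat (1\<^sub>m 2) V * X1 n * transpose_mat (kron_mat (1\<^sub>m 2) V) = X1 n"
proof -
  note Vc = cl_carrier[OF V] and Vo = cl_orth[OF V] and Vo2 = cl_orth2[OF V]
  have T: "transpose_mat (kron_mat (1\<^sub>m 2) V) = kron_mat (1\<^sub>m 2) (transpose_mat V)"
    by (simp add: kron_transpose)
  have cj: "kron_mat (1\<^sub>m 2) V * kron_mat Q R * transpose_mat (kron_mat (1\<^sub>m 2) V) = kron_mat Q (V * R * transpose_mat V)"
    if Q: "Q \<in> carrier_mat 2 2" and R: "R \<in> carrier_mat (2^n) (2^n)" for Q R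
  proof -
    have "kron_mat (1\<^sub>m 2) V * kron_mat Q R = kron_mat (1\<^sub>m 2 * Q) (V * R)"
      by (rule kron_mult) (use Q R Vc in auto)
    then have "kron_mat (1\<^sub>m 2) V * kron_mat Q R * transpose_mat (kron_mat (1\<^sub>m 2) V)
      = kron_mat Q (V * R) * kron_mat (1\<^sub>m 2) (transpose_mat V)" unfolding T using Q by simp
    also have "\<dots> = kron_mat (Q * 1\<^sub>m 2) (V * R * transpose_mat V)"
      by (rule kron_mult) (use Q R Vc in auto)
    finally show ?thesis using Q by simp
  qed
  have o: "transpose_mat (kron_mat (1\<^sub>m 2) V) * kron_mat (1\<^sub>m 2) V = 1\<^sub>m (2^Suc n)"
  proof -
    have "transpose_mat (kron_mat (1\<^sub>m 2) V) * kron_mat (1\<^sub>m 2) V = kron_mat (1\<^sub>m 2 * 1\<^sub>m 2) (transpose_mat V * V)"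
      unfolding T by (rule kron_mult) (use Vc in auto)
    then show ?thesis using Vo by (simp add: kron_one)
  qed
  have "kron_mat (1\<^sub>m 2) V * M * transpose_mat (kron_mat (1\<^sub>m 2) V) \<in> real_pauli_group (Suc n)"
    if M: "M \<in> real_pauli_group (Suc n)" for M
  proof -
    obtain Q R where Q: "Q \<in> pauli1" and R: "R \<in> real_pauli_group n" and MQ: "M = kron_mat Q R" using M unfolding pg_Suc by auto
    show ?thesis unfolding MQ cj[OF pauli1_carrier[OF Q] pg_carrier[OF R]] using in_pg_Suc[OF Q cl_conj[OF V R]] .
  qed
  then show "kron_mat (1\<^sub>m 2) V \<in> real_clifford_group (Suc n)" unfolding cl_iff using o Vc by auto
  show "kron_mat (1\<^sub>m 2) V * Z1 n * transpose_mat (kron_mat (1\<^sub>m 2) V) = Z1 n"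
    using cj[OF Z_carrier one_carrier_mat] Vc Vo2 by simp
  show "kron_mat (1\<^sub>m 2) V * X1 n * transpose_mat (kron_mat (1\<^sub>m 2) V) = X1 n"
    using cj[OF X_carrier one_carrier_mat] Vc Vo2 by simp
qed

lemma comm_of_fix: assumes U: "U \<in> real_clifford_group m" and M: "M \<in> carrier_mat (2^m) (2^m)"
  and h: "U * M * transpose_mat U = M" shows "U * M = M * U"
proof -
  note Uc = cl_carrier[OF U] and Uo = cl_orth[OF U]
  have "M * U = U * M * transpose_mat U * U" using h by simp
  also have "\<dots> = U * M * (transpose_mat U * U)" using Uc M by (intro assoc_mult_mat) auto
  finally show ?thesis using Uo Uc M by simp
qed

lemma blk: "X \<in> carrier_mat N N \<Longrightarrow> X * 0\<^sub>m N N = 0\<^sub>m N N \<and> X * 1\<^sub>m N = X \<and> 0\<^sub>m N N + X = X \<and> X + 0\<^sub>m N N = (X::real mat)"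
  by auto

lemma stab_char:
  assumes U: "U \<in> real_clifford_group (Suc n)" and hZ: "U * Z1 n * transpose_mat U = Z1 n"
    and hX: "U * X1 n * transpose_mat U = X1 n"
  shows "\<exists>V\<in>real_clifford_group n. U = kron_mat (1\<^sub>m 2) V"
proof -
  let ?N = "(2::nat)^n"
  have Uc: "U \<in> carrier_mat (?N + ?N) (?N + ?N)" using cl_carrier[OF U] by (simp add: mult_2)
  obtain A B C D where sb: "split_block U ?N ?N = (A,B,C,D)" by (cases "split_block U ?N ?N") auto
  note spl = split_block[OF sb, of ?N ?N] 
  have c: "A \<in> carrier_mat ?N ?N" "B \<in> carrier_mat ?N ?N" "C \<in> carrier_mat ?N ?N" "D \<in> carrier_mat ?N ?N"
    and UA: "U = four_block_mat A B C D" using spl Uc by auto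
  have cZ: "U * Z1 n = Z1 n * U" by (rule comm_of_fix[OF U pg_carrier[OF Z1_pg] hZ])
  have cX: "U * X1 n = X1 n * U" by (rule comm_of_fix[OF U pg_carrier[OF X1_pg] hX])
  have z1: "Z1 n = four_block_mat (1\<^sub>m ?N) (0\<^sub>m ?N ?N) (0\<^sub>m ?N ?N) (- 1\<^sub>m ?N)" by (rule kron_Z_fb) simp
  have x1: "X1 n = four_block_mat (0\<^sub>m ?N ?N) (1\<^sub>m ?N) (1\<^sub>m ?N) (0\<^sub>m ?N ?N)" by (rule kron_X_fb) simp
  have e1: "U * Z1 n = four_block_mat A (- B) C (- D)" unfolding UA z1
    apply (subst fb_mult[where N="?N"])
    using c apply (simp_all)
    done
  have e2: "Z1 n * U = four_block_mat A B (- C) (- D)" unfolding UA z1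
    apply (subst fb_mult[where N="?N"])
    using c apply (simp_all)
    done
  have "four_block_mat A (- B) C (- D) = U * Z1 n" by (rule e1[symmetric])
  also have "\<dots> = Z1 n * U" by (rule cZ)
  also have "\<dots> = four_block_mat A B (- C) (- D)" by (rule e2)
  finally have "four_block_mat A (- B) C (- D) = four_block_mat A B (- C) (- D)" .
  from fb_inj[OF c(1) neg_sq[OF c(2)] c(3) neg_sq[OF c(4)] c(1) c(2) neg_sq[OF c(3)] neg_sq[OF c(4)] this]
  have nb: "- B = B" and nc: "C = - C" by blast+
  have B0: "B = 0\<^sub>m ?N ?N" by (rule neg_self_zero_mat[OF c(2) nb[symmetric]])
  have C0: "C = 0\<^sub>m ?N ?N" by (rule neg_self_zero_mat[OF c(3) nc])
  have e3: "U * X1 n = four_block_mat B A D C" unfolding UA x1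
    apply (subst fb_mult[where N="?N"])
    using c apply (simp_all only: blk one_carrier_mat zero_carrier_mat)
    done
  have e4: "X1 n * U = four_block_mat C D A B" unfolding UA x1
    apply (subst fb_mult[where N="?N"])
    using c apply (simp_all only: blk one_carrier_mat zero_carrier_mat left_mult_one_mat left_mult_zero_mat)
    done
  have "four_block_mat B A D C = U * X1 n" by (rule e3[symmetric])
  also have "\<dots> = X1 n * U" by (rule cX)
  also have "\<dots> = four_block_mat C D A B" by (rule e4)
  finally have "four_block_mat B A D C = four_block_mat C D A B" .
  from fb_inj[OF c(2) c(1) c(4) c(3) c(3) c(4) c(1) c(2) this] have "A = D" by blast
  then have UV: "U = kron_mat (1\<^sub>m 2) A" unfolding UA B0 C0 using kron_I_fb[OF c(1)] by simp
  have "transpose_mat A * A = 1\<^sub>m ?N"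
  proof -
    have "transpose_mat U * U = kron_mat (1\<^sub>m 2 * 1\<^sub>m 2) (transpose_mat A * A)"
      unfolding UV kron_transpose transpose_one by (rule kron_mult) (use c in auto)
    then have "kron_mat (1\<^sub>m 2) (transpose_mat A * A) = transpose_mat U * U" by simp
    also have "\<dots> = kron_mat (1\<^sub>m 2) (1\<^sub>m ?N)" using cl_orth[OF U] by (simp add: kron_one)
    finally show ?thesis using kron_cancel[OF pauli1_I, of "transpose_mat A * A" ?N "1\<^sub>m ?N"] c by auto
  qed
  moreover have "A * R * transpose_mat A \<in> real_pauli_group n" if R: "R \<in> real_pauli_group n" for R
  proof -
    have "U * kron_mat (1\<^sub>m 2) R * transpose_mat U = kron_mat (1\<^sub>m 2) (A * R * transpose_mat A)"
    proof -
      have "U * kron_mat (1\<^sub>m 2) R = kron_mat (1\<^sub>m 2 * 1\<^sub>m 2) (A * R)"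
        unfolding UV by (rule kron_mult) (use c pg_carrier[OF R] in auto)
      then have "U * kron_mat (1\<^sub>m 2) R * transpose_mat U = kron_mat (1\<^sub>m 2) (A * R) * kron_mat (1\<^sub>m 2) (transpose_mat A)"
        unfolding UV kron_transpose by simp
      also have "\<dots> = kron_mat (1\<^sub>m 2 * 1\<^sub>m 2) (A * R * transpose_mat A)"
        by (rule kron_mult) (use c pg_carrier[OF R] in auto)
      finally show ?thesis by simp
    qed
    moreover have "U * kron_mat (1\<^sub>m 2) R * transpose_mat U \<in> real_pauli_group (Suc n)"
      using cl_conj[OF U in_pg_Suc[OF pauli1_I R]] .
    ultimately obtain Q' R' where Q': "Q' \<in> pauli1" and R': "R' \<in> real_pauli_group n"
      and e: "kron_mat Q' R' = kron_mat (1\<^sub>m 2) (A * R * transpose_mat A)" unfolding pg_Suc by auto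
    have "R' = A * R * transpose_mat A" using kron_inj[OF Q' pauli1_I R' _ e] c pg_carrier[OF R] by auto
    then show ?thesis using R' by simp
  qed
  ultimately have "A \<in> real_clifford_group n" unfolding cl_iff using c by auto
  then show ?thesis using UV by auto
qed


definition Bset :: "nat \<Rightarrow> real mat \<Rightarrow> real mat set" where
  "Bset m A = {B \<in> Sym m. A * B = - (B * A)}"

lemma Sym_T: "B \<in> Sym m \<Longrightarrow> transpose_mat B = B" unfolding Sym_def by auto
lemma Sym_pg: "B \<in> Sym m \<Longrightarrow> B \<in> real_pauli_group m" unfolding Sym_def by auto

lemma conj_bset:
  assumes W: "W \<in> real_clifford_group m" and A: "A \<in> real_pauli_group m" and B: "B \<in> Bset m A"
  shows "W * B * transpose_mat W \<in> Bset m (W * A * transpose_mat W)"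
proof -
  note Wc = cl_carrier[OF W] and Wo = cl_orth[OF W]
  have Bs: "B \<in> Sym m" and ab: "A * B = - (B * A)" using B unfolding Bset_def by auto
  have Bc: "B \<in> carrier_mat (2^m) (2^m)" using pg_carrier[OF Sym_pg[OF Bs]] .
  have Ac: "A \<in> carrier_mat (2^m) (2^m)" using pg_carrier[OF A] .
  have "W * B * transpose_mat W \<in> Sym m"
    unfolding Sym_def using cl_conj[OF W Sym_pg[OF Bs]] conj_T[OF Wc Bc] Sym_T[OF Bs] by simp
  moreover have "(W * A * transpose_mat W) * (W * B * transpose_mat W) = - ((W * B * transpose_mat W) * (W * A * transpose_mat W))"
  proof -
    have "(W * A * transpose_mat W) * (W * B * transpose_mat W) = W * (A * B) * transpose_mat W"
      by (rule conj_mult[OF Wc Wo Ac Bc])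
    also have "\<dots> = W * (- (B * A)) * transpose_mat W" using ab by simp
    also have "\<dots> = - (W * (B * A) * transpose_mat W)" by (rule conj_neg[OF Wc]) (use Ac Bc in auto)
    also have "W * (B * A) * transpose_mat W = (W * B * transpose_mat W) * (W * A * transpose_mat W)"
      by (rule conj_mult[OF Wc Wo Bc Ac, symmetric])
    finally show ?thesis .
  qed
  ultimately show ?thesis unfolding Bset_def by auto
qed

lemma Bset_finite: "finite (Bset m A)"
  by (rule finite_subset[OF _ pg_finite[of m]]) (auto simp: Bset_def Sym_def)

lemma card_Bset_eq:
  assumes U: "U \<in> real_clifford_group m" and A: "A \<in> real_pauli_group m"
  shows "card (Bset m (U * A * transpose_mat U)) = card (Bset m A)"
proof -
  note Uc = cl_carrier[OF U] and Uo = cl_orth[OF U] and Uo2 = cl_orth2[OF U]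
  have UT: "transpose_mat U \<in> real_clifford_group m" using cl_T[OF U] .
  let ?AA = "U * A * transpose_mat U"
  have A': "?AA \<in> real_pauli_group m" using cl_conj[OF U A] .
  have bk: "transpose_mat U * ?AA * transpose_mat (transpose_mat U) = A"
    unfolding transpose_transpose by (rule conj_inv[OF Uc Uo pg_carrier[OF A]])
  have inj1: "inj_on (\<lambda>B. U * B * transpose_mat U) (Bset m A)"
  proof (rule inj_onI)
    fix B B' assume B: "B \<in> Bset m A" and B': "B' \<in> Bset m A" and e: "U * B * transpose_mat U = U * B' * transpose_mat U"
    have Bc: "B \<in> carrier_mat (2^m) (2^m)" "B' \<in> carrier_mat (2^m) (2^m)"
      using B B' pg_carrier unfolding Bset_def Sym_def by auto
    have "B = transpose_mat U * (U * B * transpose_mat U) * U" by (rule conj_inv[OF Uc Uo Bc(1), symmetric])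
    also have "\<dots> = transpose_mat U * (U * B' * transpose_mat U) * U" by (simp only: e)
    also have "\<dots> = B'" by (rule conj_inv[OF Uc Uo Bc(2)])
    finally show "B = B'" .
  qed
  have inj2: "inj_on (\<lambda>B. transpose_mat U * B * transpose_mat (transpose_mat U)) (Bset m ?AA)"
  proof (rule inj_onI)
    fix B B' assume B: "B \<in> Bset m ?AA" and B': "B' \<in> Bset m ?AA"
      and e: "transpose_mat U * B * transpose_mat (transpose_mat U) = transpose_mat U * B' * transpose_mat (transpose_mat U)"
    have Bc: "B \<in> carrier_mat (2^m) (2^m)" "B' \<in> carrier_mat (2^m) (2^m)"
      using B B' pg_carrier unfolding Bset_def Sym_def by auto
    note UTc = cl_carrier[OF UT] and UTo = cl_orth[OF UT]
    have "B = transpose_mat (transpose_mat U) * (transpose_mat U * B * transpose_mat (transpose_mat U)) * transpose_mat U"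
      by (rule conj_inv[OF UTc UTo Bc(1), symmetric])
    also have "\<dots> = transpose_mat (transpose_mat U) * (transpose_mat U * B' * transpose_mat (transpose_mat U)) * transpose_mat U"
      by (simp only: e)
    also have "\<dots> = B'" by (rule conj_inv[OF UTc UTo Bc(2)])
    finally show "B = B'" .
  qed
  have "card (Bset m A) \<le> card (Bset m ?AA)"
    by (rule card_inj_on_le[OF inj1 _ Bset_finite]) (use conj_bset[OF U A] in auto)
  moreover have "card (Bset m ?AA) \<le> card (Bset m A)"
  proof (rule card_inj_on_le[OF inj2 _ Bset_finite])
    show "(\<lambda>B. transpose_mat U * B * transpose_mat (transpose_mat U)) ` Bset m ?AA \<subseteq> Bset m A"
      using conj_bset[OF UT A'] bk by auto
  qed
  ultimately show ?thesis by simp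
qed

lemma Z1_sym: "Z1 n \<in> Sym (Suc n)"
  unfolding Sym_def using Z1_pg by (simp add: kron_transpose ZT)
lemma X1_sym: "X1 n \<in> Sym (Suc n)"
  unfolding Sym_def using X1_pg by (simp add: kron_transpose XT)

lemma card_Bset: assumes A: "A \<in> Sym (Suc n)" "A \<noteq> 1\<^sub>m (2^Suc n)" "A \<noteq> - 1\<^sub>m (2^Suc n)"
  shows "card (Bset (Suc n) A) = 2 * 4^n"
proof -
  obtain U where U: "U \<in> real_clifford_group (Suc n)" "U * Z1 n * transpose_mat U = A" using T1[OF A] by auto
  have "card (Bset (Suc n) A) = card (Bset (Suc n) (Z1 n))"
    using card_Bset_eq[OF U(1) Z1_pg] U(2) by simp
  also have "\<dots> = 2 * 4^n" using card_Bset_Z1[of n] unfolding Bset_def .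
  finally show ?thesis .
qed


definition fmap :: "nat \<Rightarrow> real mat \<Rightarrow> real mat \<times> real mat" where
  "fmap n U = (U * Z1 n * transpose_mat U, U * X1 n * transpose_mat U)"

definition Asym :: "nat \<Rightarrow> real mat set" where
  "Asym n = {A \<in> Sym (Suc n). A \<noteq> 1\<^sub>m (2^Suc n) \<and> A \<noteq> - 1\<^sub>m (2^Suc n)}"

definition Qset :: "nat \<Rightarrow> (real mat \<times> real mat) set" where
  "Qset n = Sigma (Asym n) (Bset (Suc n))"

lemma ZX_anti: "Z1 n * X1 n = - (X1 n * Z1 n)"
proof -
  have "Z1 n * X1 n = kron_mat (pauli_Z * pauli_X) (1\<^sub>m (2^n) * 1\<^sub>m (2^n))"
    by (rule kron_mult) auto
  moreover have "X1 n * Z1 n = kron_mat (pauli_X * pauli_Z) (1\<^sub>m (2^n) * 1\<^sub>m (2^n))"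
    by (rule kron_mult) auto
  ultimately show ?thesis using ZX XZ by (simp add: kron_uminus_left)
qed

lemma X1_Bset: "X1 n \<in> Bset (Suc n) (Z1 n)"
  unfolding Bset_def using X1_sym ZX_anti by auto

lemma f_in_Qset: assumes U: "U \<in> real_clifford_group (Suc n)" shows "fmap n U \<in> Qset n"
proof -
  let ?A = "U * Z1 n * transpose_mat U" and ?B = "U * X1 n * transpose_mat U"
  have B: "?B \<in> Bset (Suc n) ?A" using conj_bset[OF U Z1_pg X1_Bset] .
  have Bs: "?B \<in> Sym (Suc n)" and ab: "?A * ?B = - (?B * ?A)" using B unfolding Bset_def by auto
  have Bpg: "?B \<in> real_pauli_group (Suc n)" using Sym_pg[OF Bs] .
  note Bc = pg_facts[OF Bpg]
  have As: "?A \<in> Sym (Suc n)"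
    unfolding Sym_def using cl_conj[OF U Z1_pg] conj_T[OF cl_carrier[OF U] pg_carrier[OF Z1_pg]] Sym_T[OF Z1_sym] by simp
  have "?A \<noteq> 1\<^sub>m (2^Suc n)"
  proof
    assume "?A = 1\<^sub>m (2^Suc n)"
    then have "?B = - ?B" using ab Bc by simp
    then show False using pg_not_neg[OF Bpg] by simp
  qed
  moreover have "?A \<noteq> - 1\<^sub>m (2^Suc n)"
  proof
    assume "?A = - 1\<^sub>m (2^Suc n)"
    then have "- ?B = ?B" using ab Bc by simp
    then have "?B = - ?B" by (rule sym)
    then show False using pg_not_neg[OF Bpg] by blast
  qed
  ultimately show ?thesis unfolding fmap_def Qset_def Asym_def using As B by auto
qed

lemma f_surj: assumes q: "q \<in> Qset n" shows "\<exists>U\<in>real_clifford_group (Suc n). fmap n U = q"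
proof -
  obtain A B where qAB: "q = (A,B)" and A: "A \<in> Sym (Suc n)" "A \<noteq> 1\<^sub>m (2^Suc n)" "A \<noteq> - 1\<^sub>m (2^Suc n)"
    and B: "B \<in> Bset (Suc n) A" using q unfolding Qset_def Asym_def by auto
  obtain U1 where U1: "U1 \<in> real_clifford_group (Suc n)" "U1 * Z1 n * transpose_mat U1 = A" using T1[OF A] by auto
  have U1T: "transpose_mat U1 \<in> real_clifford_group (Suc n)" using cl_T[OF U1(1)] .
  note U1c = cl_carrier[OF U1(1)] and U1o = cl_orth[OF U1(1)] and U1Tc = cl_carrier[OF U1T] and U1To = cl_orth[OF U1T]
  let ?B0 = "transpose_mat U1 * B * transpose_mat (transpose_mat U1)"
  have Apg: "A \<in> real_pauli_group (Suc n)" using Sym_pg[OF A(1)] .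
  have "transpose_mat U1 * A * transpose_mat (transpose_mat U1) = Z1 n"
    unfolding U1(2)[symmetric] transpose_transpose by (rule conj_inv[OF U1c U1o pg_carrier[OF Z1_pg]])
  then have B0: "?B0 \<in> Bset (Suc n) (Z1 n)" using conj_bset[OF U1T Apg B] by simp
  then obtain U2 where U2: "U2 \<in> real_clifford_group (Suc n)" "U2 * Z1 n * transpose_mat U2 = Z1 n"
    "U2 * X1 n * transpose_mat U2 = ?B0" using T2[of ?B0 n] unfolding Bset_def by auto
  have Bc: "B \<in> carrier_mat (2^Suc n) (2^Suc n)" using B pg_carrier[OF Sym_pg[of B "Suc n"]] unfolding Bset_def by auto
  have "fmap n (U1 * U2) = (A, B)"
  proof -
    have "(U1 * U2) * Z1 n * transpose_mat (U1 * U2) = A"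
      unfolding conj_comp[OF U1(1) U2(1) pg_carrier[OF Z1_pg]] U2(2) U1(2) ..
    moreover have "(U1 * U2) * X1 n * transpose_mat (U1 * U2) = B"
    proof -
      have "(U1 * U2) * X1 n * transpose_mat (U1 * U2) = U1 * ?B0 * transpose_mat U1"
        unfolding conj_comp[OF U1(1) U2(1) pg_carrier[OF X1_pg]] U2(3) ..
      also have "\<dots> = B"
        using conj_inv[OF U1Tc U1To Bc] by simp
      finally show ?thesis .
    qed
    ultimately show ?thesis unfolding fmap_def by simp
  qed
  then show ?thesis using cl_mult[OF U1(1) U2(1)] qAB by auto
qed

lemma fiber_eq:
  assumes U0: "U0 \<in> real_clifford_group (Suc n)"
  shows "{U \<in> real_clifford_group (Suc n). fmap n U = fmap n U0}
     = (\<lambda>W. U0 * W) ` (kron_mat (1\<^sub>m 2) ` real_clifford_group n)"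
proof (intro equalityI subsetI)
  fix U assume "U \<in> {U \<in> real_clifford_group (Suc n). fmap n U = fmap n U0}"
  then have U: "U \<in> real_clifford_group (Suc n)" and fU: "fmap n U = fmap n U0" by auto
  have U0T: "transpose_mat U0 \<in> real_clifford_group (Suc n)" using cl_T[OF U0] .
  note U0c = cl_carrier[OF U0] and U0o = cl_orth[OF U0] and U0o2 = cl_orth2[OF U0]
  let ?W = "transpose_mat U0 * U"
  have W: "?W \<in> real_clifford_group (Suc n)" using cl_mult[OF U0T U] .
  have e: "U * Z1 n * transpose_mat U = U0 * Z1 n * transpose_mat U0" "U * X1 n * transpose_mat U = U0 * X1 n * transpose_mat U0"
    using fU unfolding fmap_def by auto
  have wz: "?W * Z1 n * transpose_mat ?W = Z1 n"
    unfolding conj_comp[OF U0T U pg_carrier[OF Z1_pg]] e(1) transpose_transpose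
    by (rule conj_inv[OF U0c U0o pg_carrier[OF Z1_pg]])
  have wx: "?W * X1 n * transpose_mat ?W = X1 n"
    unfolding conj_comp[OF U0T U pg_carrier[OF X1_pg]] e(2) transpose_transpose
    by (rule conj_inv[OF U0c U0o pg_carrier[OF X1_pg]])
  obtain V where V: "V \<in> real_clifford_group n" "?W = kron_mat (1\<^sub>m 2) V" using stab_char[OF W wz wx] by auto
  have "U0 * ?W = U" using cancel_l[OF U0c T_sq[OF U0c] cl_carrier[OF U] U0o2] .
  then show "U \<in> (\<lambda>W. U0 * W) ` (kron_mat (1\<^sub>m 2) ` real_clifford_group n)" using V by auto
next
  fix U assume "U \<in> (\<lambda>W. U0 * W) ` (kron_mat (1\<^sub>m 2) ` real_clifford_group n)"
  then obtain V where V: "V \<in> real_clifford_group n" and UV: "U = U0 * kron_mat (1\<^sub>m 2) V" by auto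
  note K = kronI_cl[OF V]
  have "U \<in> real_clifford_group (Suc n)" unfolding UV by (rule cl_mult[OF U0 K(1)])
  moreover have "fmap n U = fmap n U0"
    unfolding fmap_def UV conj_comp[OF U0 K(1) pg_carrier[OF Z1_pg]] conj_comp[OF U0 K(1) pg_carrier[OF X1_pg]] K(2) K(3) ..
  ultimately show "U \<in> {U \<in> real_clifford_group (Suc n). fmap n U = fmap n U0}" by auto
qed

lemma card_fiber:
  assumes U0: "U0 \<in> real_clifford_group (Suc n)" and fin: "finite (real_clifford_group n)"
  shows "card {U \<in> real_clifford_group (Suc n). fmap n U = fmap n U0} = card (real_clifford_group n)"
    "finite {U \<in> real_clifford_group (Suc n). fmap n U = fmap n U0}"
proof -
  note U0c = cl_carrier[OF U0] and U0o = cl_orth[OF U0]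
  have inj1: "inj_on (kron_mat (1\<^sub>m 2)) (real_clifford_group n)"
    by (rule inj_onI) (use kron_cancel[OF pauli1_I] cl_carrier in blast)
  have inj2: "inj_on (\<lambda>W. U0 * W) (kron_mat (1\<^sub>m 2) ` real_clifford_group n)"
  proof (rule inj_onI)
    fix W W' assume "W \<in> kron_mat (1\<^sub>m 2) ` real_clifford_group n" "W' \<in> kron_mat (1\<^sub>m 2) ` real_clifford_group n"
      and e: "U0 * W = U0 * W'"
    then have Wc: "W \<in> carrier_mat (2^Suc n) (2^Suc n)" "W' \<in> carrier_mat (2^Suc n) (2^Suc n)"
      using kronI_cl(1) cl_carrier by blast+
    have "W = transpose_mat U0 * (U0 * W)" using cancel_l[OF T_sq[OF U0c] U0c Wc(1) U0o] by simp
    also have "\<dots> = transpose_mat U0 * (U0 * W')" by (simp only: e)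
    also have "\<dots> = W'" using cancel_l[OF T_sq[OF U0c] U0c Wc(2) U0o] .
    finally show "W = W'" .
  qed
  show "card {U \<in> real_clifford_group (Suc n). fmap n U = fmap n U0} = card (real_clifford_group n)"
    unfolding fiber_eq[OF U0] card_image[OF inj2] card_image[OF inj1] ..
  show "finite {U \<in> real_clifford_group (Suc n). fmap n U = fmap n U0}"
    unfolding fiber_eq[OF U0] using fin by simp
qed

lemma Qset_finite: "finite (Qset n)"
proof -
  have "Qset n \<subseteq> real_pauli_group (Suc n) \<times> real_pauli_group (Suc n)"
    unfolding Qset_def Asym_def Bset_def Sym_def by auto
  then show ?thesis using pg_finite finite_subset by blast
qed

lemma card_Qset: "card (Qset n) = (4^Suc n + 2^Suc n - 2) * (2 * 4^n)"
proof -
  have fA: "finite (Asym n)" by (rule finite_subset[OF _ pg_finite[of "Suc n"]]) (auto simp: Asym_def Sym_def)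
  have "card (Qset n) = (\<Sum>A\<in>Asym n. card (Bset (Suc n) A))"
    unfolding Qset_def by (rule card_SigmaI[OF fA]) (simp add: Bset_finite)
  also have "\<dots> = (\<Sum>A\<in>Asym n. 2 * 4^n)"
    by (rule sum.cong) (auto simp: Asym_def intro: card_Bset)
  also have "\<dots> = card (Asym n) * (2 * 4^n)" by simp
  also have "card (Asym n) = 4^Suc n + 2^Suc n - 2"
  proof -
    have one: "1\<^sub>m (2^Suc n) \<in> Sym (Suc n)" "- 1\<^sub>m (2^Suc n) \<in> Sym (Suc n)"
      unfolding Sym_def using pg_one[of "Suc n"] pg_uminus[OF pg_one[of "Suc n"]] by (auto simp: transpose_uminus)
    have ne: "(1\<^sub>m (2^Suc n) :: real mat) \<noteq> - 1\<^sub>m (2^Suc n)" by (rule one_neq_neg_one_mat) simp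
    have "Asym n = Sym (Suc n) - {1\<^sub>m (2^Suc n), - 1\<^sub>m (2^Suc n)}" unfolding Asym_def by auto
    moreover have "finite (Sym (Suc n))" using pg_finite unfolding Sym_def by auto
    ultimately have "card (Asym n) = card (Sym (Suc n)) - 2"
      using one ne by (simp add: card_Diff_subset)
    then show ?thesis using card_Sym_Anti[of "Suc n"] by simp
  qed
  finally show ?thesis .
qed

lemma card_cl_Suc:
  assumes fin: "finite (real_clifford_group n)"
  shows "finite (real_clifford_group (Suc n))"
    "card (real_clifford_group (Suc n)) = card (Qset n) * card (real_clifford_group n)"
proof -
  let ?F = "\<lambda>q. {U \<in> real_clifford_group (Suc n). fmap n U = q}"
  have un: "real_clifford_group (Suc n) = (\<Union>q\<in>Qset n. ?F q)"
  proof (intro equalityI subsetI)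
    fix U assume U: "U \<in> real_clifford_group (Suc n)"
    then have "U \<in> ?F (fmap n U)" by simp
    then show "U \<in> (\<Union>q\<in>Qset n. ?F q)" using f_in_Qset[OF U] by (rule UN_I[rotated])
  next
    fix U assume "U \<in> (\<Union>q\<in>Qset n. ?F q)"
    then show "U \<in> real_clifford_group (Suc n)" by blast
  qed
  have fibq: "finite (?F q) \<and> card (?F q) = card (real_clifford_group n)" if q: "q \<in> Qset n" for q
  proof -
    obtain U0 where U0: "U0 \<in> real_clifford_group (Suc n)" "fmap n U0 = q" using f_surj[OF q] by auto
    show ?thesis using card_fiber[OF U0(1) fin] U0(2) by simp
  qed
  have fU: "finite (\<Union>q\<in>Qset n. ?F q)"
    by (rule finite_UN_I[OF Qset_finite]) (rule conjunct1[OF fibq])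
  show "finite (real_clifford_group (Suc n))" by (subst un) (rule fU)
  have disj: "\<forall>i\<in>Qset n. \<forall>j\<in>Qset n. i \<noteq> j \<longrightarrow> ?F i \<inter> ?F j = {}" by auto
  have "card (real_clifford_group (Suc n)) = card (\<Union>q\<in>Qset n. ?F q)"
    using arg_cong[OF un, of card] .
  also have "\<dots> = (\<Sum>q\<in>Qset n. card (?F q))"
    by (rule card_UN_disjoint[OF Qset_finite _ disj]) (intro ballI conjunct1[OF fibq])
  also have "\<dots> = (\<Sum>q\<in>Qset n. card (real_clifford_group n))" by (rule sum.cong[OF refl]) (rule conjunct2[OF fibq])
  finally show "card (real_clifford_group (Suc n)) = card (Qset n) * card (real_clifford_group n)" by simp
qed

lemma cl_0: "real_clifford_group 0 = {1\<^sub>m 1, - 1\<^sub>m 1}"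
proof (intro equalityI subsetI)
  fix U assume U: "U \<in> real_clifford_group 0"
  have Uc: "U \<in> carrier_mat 1 1" using cl_carrier[OF U] by simp
  have "(transpose_mat U * U) $$ (0,0) = (1\<^sub>m 1 :: real mat) $$ (0,0)" using cl_orth[OF U] by simp
  then have "U $$ (0,0) * U $$ (0,0) = 1" using Uc by (simp add: scalar_prod_def)
  then have "U $$ (0,0) = 1 \<or> U $$ (0,0) = -1"
    by (simp add: square_eq_1_iff)
  then show "U \<in> {1\<^sub>m 1, - 1\<^sub>m 1}" using Uc
    by (auto intro!: eq_matI)
next
  fix U assume U: "U \<in> {1\<^sub>m 1, - 1\<^sub>m 1 :: real mat}"
  have "U \<in> carrier_mat 1 1" "transpose_mat U * U = 1\<^sub>m 1" using U by (auto simp: transpose_uminus)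
  moreover have "U * P * transpose_mat U \<in> real_pauli_group 0" if "P \<in> real_pauli_group 0" for P
    using U that by (auto simp: pg_0 transpose_uminus)
  ultimately show "U \<in> real_clifford_group 0" unfolding cl_iff by simp
qed

theorem main:
  "finite (real_clifford_group n) \<and> card (real_clifford_group n) =
    2 * (\<Prod>i = 1..n. (4^i + 2^i - 2) * (2 * 4^(i - 1)))"
proof (induction n)
  case 0
  have "card (real_clifford_group 0) = 2" unfolding cl_0 using one_neq_neg_one_mat[of 1] by simp
  then show ?case unfolding cl_0 by simp
next
  case (Suc n)
  then have fin: "finite (real_clifford_group n)" by simp
  show ?case using card_cl_Suc[OF fin] Suc card_Qset[of n] by (simp add: mult_ac)
qed


theorem corollary4p16:
  fixes n :: nat
  shows "card (real_clifford_group n) =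
    2 * (\<Prod>i = 1..n. (4^i + 2^i - 2) * (2 * 4^(i - 1)))"
  using main[of n] by simp

end
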